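(* Let $A$ be a finite set. The map $\mathrm{Ch}(Y^A)\ni\mathbf c\mapsto\overset{*}{<}_{\mathbf c}\in(R(A),\sqsupseteq)$ and the map $(R(A),\sqsupseteq)\ni\overset{*}{<}\mapsto\mathbf c^{\overset{*}{<}}\in\mathrm{Ch}(Y^A)$ are mutually inverse $\Sigma_A$-equivariant isomorphisms of posets, where $\mathrm{Ch}(Y^A)$ is ordered by $\mathbf c\le\mathbf e$ iff there is a morphism from $\mathbf c$ to $\mathbf e$ in the cube chain category.
   Context: $Y^A$ is the bi-pointed precubical set where $Y^A[k]$ is the set of pairs $(c,<)$ with $c:A\to\{0,*,1\}$, $|c^{-1}( * )|=k$, and $<$ a strict total order on $c^{-1}( * )$; if $c^{-1}( * )=\{a_1<\dots<a_k\}$ then the face $d^\varepsilon_i(c,<)=(c',<')$ where $c'(a_i)=\varepsilon$, $c'=c$ elsewhere, $<'$ the restriction of $<$; initial vertex $(\text{const}_0,\emptyset)$, final vertex $(\text{const}_1,\emptyset)$. For a cube $x$, $d^0(x)$, $d^1(x)$ are the vertices obtained by repeatedly applying $d^0_1$, resp. $d^1_1$. A cube chain is a sequence $\mathbf c=((c_1,<_1),\dots,(c_l,<_l))$ of cubes of positive dimension with $d^0$ of the first equal to the initial vertex, $d^1$ of the last equal to the final vertex, and $d^1$ of each equal to $d^0$ of the next; it corresponds to a bi-pointed precubical map from the serial wedge $\square^{n_1}\vee\dots\vee\square^{n_l}$ of standard cubes to $Y^A$. The cube chain category $\mathrm{Ch}(Y^A)$ has these maps as objects and as morphisms $\mathbf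 a\to\mathbf b$ the precubical maps $f$ between the wedges with $\mathbf b\circ f=\mathbf a$. For a cube chain $\mathbf c$ and $a\in A$ there is a unique $h_{\mathbf c}(a)$ with $c_{h_{\mathbf c}(a)}(a)=*$; define $\overset{*}{<}_{\mathbf c}=(\overset{x}{<}_{\mathbf c},\overset{y}{<}_{\mathbf c})$ by $a\overset{x}{<}_{\mathbf c}b$ iff $h_{\mathbf c}(a)<h_{\mathbf c}(b)$, and $a\overset{y}{<}_{\mathbf c}b$ iff $h_{\mathbf c}(a)=h_{\mathbf c}(b)=j$ and $a<_jb$. A strict partial order is semi-linear if induced by a (unique) surjection $h:A\to\{1,\dots,l\}$ ($a<b$ iff $h(a)<h(b)$). A double order on $A$ is a pair $(\overset{x}{<},\overset{y}{<})$ of strict partial orders such that any two distinct elements are comparable by one of them; it is regular if $\overset{x}{<}$ is semi-linear and $a\overset{x}{<}b$ implies $a,b$ are not $\overset{y}{<}$-comparable. $R(A)$ is the set of regular double orders, and $\overset{*}{<}_1\sqsubseteq\overset{*}{<}_2$ iff $\overset{x}{<}_1\subseteq\overset{x}{<}_2$ and $\overset{y}{<}_1\supseteq\overset{y}{<}_2$ ($\sqsupseteq$ is the opposite order). For $\overset{*}{<}\in R(A)$ with $h=h(\overset{x}{<}):A\to\{1,\dots,l\}$, let $c_j(a)=1$ if $h(a)<j$, $*$ if $h(a)=j$, $0$ if $h(a)>j$, let $<_j$ be the restriction of $\overset{y}{<}$ to $h^{-1}(j)$, and $\mathbf c^{\overset{*}{<}}=((c_1,<_1),\dots,(c_l,<_l))$.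 $\Sigma_A$ acts on $Y^A$ by $(c,<)\sigma=(c\circ\sigma,<\sigma)$ with $a(<\sigma)b$ iff $\sigma(a)<\sigma(b)$, on cube chains cubewise, and on double orders by $(\overset{x}{<},\overset{y}{<})\sigma=(\overset{x}{<}\sigma,\overset{y}{<}\sigma)$. *)

theory Defs
  imports "HOL-Library.FuncSet" "HOL-Combinatorics.Permutations"
begin

(* values of coordinates: 0, *, 1 *)
datatype cval = C0 | CS | C1

definition eps :: "bool \<Rightarrow> cval" where
  "eps e = (if e then C1 else C0)"

(* ---------- generic precubical maps ----------
   a precubical set is given by a set of cells X, a dimension function dX
   (X[k] = {x \<in> X. dX x = k}) and face maps fX x i e = d^e_i x  (1 \<le> i \<le> dX x) *)
definition precub_map ::
  "('c \<Rightarrow> nat) \<Rightarrow> ('c \<Rightarrow> nat \<Rightarrow> bool \<Rightarrow> 'c) \<Rightarrow> 'c set \<Rightarrow>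
   ('d \<Rightarrow> nat) \<Rightarrow> ('d \<Rightarrow> nat \<Rightarrow> bool \<Rightarrow> 'd) \<Rightarrow> 'd set \<Rightarrow> ('c \<Rightarrow> 'd) \<Rightarrow> bool" where
  "precub_map dX fX X dY fY Y f \<longleftrightarrow>
     (\<forall>x\<in>X. f x \<in> Y \<and> dY (f x) = dX x \<and>
        (\<forall>i e. 1 \<le> i \<and> i \<le> dX x \<longrightarrow> f (fX x i e) = fY (f x) i e))"

(* ---------- standard cubes and serial wedges ----------
   a cell of \<box>^n is a list x \<in> {0,*,1}^n; d^e_i replaces the i-th * by e *)
fun repl_star :: "cval list \<Rightarrow> nat \<Rightarrow> cval \<Rightarrow> cval list" where
  "repl_star [] i v = []"
| "repl_star (w # xs) i v =
     (if w = CS then (if i = 1 then v # xs else w # repl_star xs (i - 1) v)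
      else w # repl_star xs i v)"

(* cells of the serial wedge \<box>^{n_1} \<or> ... \<or> \<box>^{n_l}: pairs (j, x) with x a cell of the
   (j+1)-th cube (0-based j); the final vertex of block j is identified with the initial
   vertex of block j+1, represented canonically by the latter.  The empty wedge (l = 0) is
   a single point. *)
definition wcells :: "nat list \<Rightarrow> (nat \<times> cval list) set" where
  "wcells ns = (if ns = [] then {(0, [])} else
     {(j, x). j < length ns \<and> length x = ns ! j \<and>
              \<not> (Suc j < length ns \<and> x = replicate (ns ! j) C1)})"

fun wdim :: "nat \<times> cval list \<Rightarrow> nat" where
  "wdim (j, x) = length (filter (\<lambda>v. v = CS) x)"

fun wcanon :: "nat list \<Rightarrow> nat \<times> cval list \<Rightarrow> nat \<times> cval list" where
  "wcanon ns (j, x) = (if Suc j < length ns \<and> x = replicate (ns ! j) C1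
       then (Suc j, replicate (ns ! Suc j) C0) else (j, x))"

fun wface :: "nat list \<Rightarrow> nat \<times> cval list \<Rightarrow> nat \<Rightarrow> bool \<Rightarrow> nat \<times> cval list" where
  "wface ns (j, x) i e = wcanon ns (j, repl_star x i (eps e))"

definition strict_total_on :: "'a set \<Rightarrow> 'a rel \<Rightarrow> bool" where
  "strict_total_on S r \<longleftrightarrow> r \<subseteq> S \<times> S \<and> irrefl r \<and> trans r \<and> total_on S r"

definition ystars :: "'a set \<Rightarrow> ('a \<Rightarrow> cval) \<Rightarrow> 'a set" where
  "ystars A c = {a \<in> A. c a = CS}"

definition ycells :: "'a set \<Rightarrow> (('a \<Rightarrow> cval) \<times> 'a rel) set" where
  "ycells A = {(c, r). c \<in> extensional A \<and> strict_total_on (ystars A c) r}"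

fun ydim :: "'a set \<Rightarrow> ('a \<Rightarrow> cval) \<times> 'a rel \<Rightarrow> nat" where
  "ydim A (c, r) = card (ystars A c)"

(* 0-based position of a in the order r *)
definition yrank :: "'a rel \<Rightarrow> 'a \<Rightarrow> nat" where
  "yrank r a = card {b. (b, a) \<in> r}"

fun yface :: "'a set \<Rightarrow> ('a \<Rightarrow> cval) \<times> 'a rel \<Rightarrow> nat \<Rightarrow> bool \<Rightarrow> ('a \<Rightarrow> cval) \<times> 'a rel" where
  "yface A (c, r) i e =
     (let a = (THE a. a \<in> ystars A c \<and> yrank r a = i - 1)
      in (c(a := eps e), Restr r (ystars A c - {a})))"

definition yinit :: "'a set \<Rightarrow> ('a \<Rightarrow> cval) \<times> 'a rel" where
  "yinit A = (restrict (\<lambda>_. C0) A, {})"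

definition yfinal :: "'a set \<Rightarrow> ('a \<Rightarrow> cval) \<times> 'a rel" where
  "yfinal A = (restrict (\<lambda>_. C1) A, {})"

definition yd0 :: "'a set \<Rightarrow> ('a \<Rightarrow> cval) \<times> 'a rel \<Rightarrow> ('a \<Rightarrow> cval) \<times> 'a rel" where
  "yd0 A y = ((\<lambda>z. yface A z 1 False) ^^ ydim A y) y"

definition yd1 :: "'a set \<Rightarrow> ('a \<Rightarrow> cval) \<times> 'a rel \<Rightarrow> ('a \<Rightarrow> cval) \<times> 'a rel" where
  "yd1 A y = ((\<lambda>z. yface A z 1 True) ^^ ydim A y) y"

definition cube_chains :: "'a set \<Rightarrow> (('a \<Rightarrow> cval) \<times> 'a rel) list set" where
  "cube_chains A = {cs. set cs \<subseteq> ycells A \<and> (\<forall>y\<in>set cs. 0 < ydim A y) \<and>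
      (if cs = [] then yinit A = yfinal A
       else yd0 A (hd cs) = yinit A \<and> yd1 A (last cs) = yfinal A) \<and>
      (\<forall>j. Suc j < length cs \<longrightarrow> yd1 A (cs ! j) = yd0 A (cs ! Suc j))}"

(* the face of the cube (c,r) corresponding to the cell x of \<box>^{dim (c,r)} *)
fun yapply :: "'a set \<Rightarrow> ('a \<Rightarrow> cval) \<times> 'a rel \<Rightarrow> cval list \<Rightarrow> ('a \<Rightarrow> cval) \<times> 'a rel" where
  "yapply A (c, r) x =
     ((\<lambda>a. if a \<in> ystars A c then x ! yrank r a else c a),
      Restr r {a \<in> ystars A c. x ! yrank r a = CS})"

(* the precubical map  \<box>^{n_1} \<or> ... \<or> \<box>^{n_l} \<rightarrow> Y^A  associated with a cube chain *)
fun chmap :: "'a set \<Rightarrow> (('a \<Rightarrow> cval) \<times> 'a rel) list \<Rightarrow> nat \<times> cval list \<Rightarrow> ('a \<Rightarrow> cval) \<times> 'a rel" where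
  "chmap A cs (j, x) = (if cs = [] then yinit A else yapply A (cs ! j) x)"

definition chain_dims :: "'a set \<Rightarrow> (('a \<Rightarrow> cval) \<times> 'a rel) list \<Rightarrow> nat list" where
  "chain_dims A cs = map (ydim A) cs"

definition chain_le :: "'a set \<Rightarrow> (('a \<Rightarrow> cval) \<times> 'a rel) list \<Rightarrow> (('a \<Rightarrow> cval) \<times> 'a rel) list \<Rightarrow> bool" where
  "chain_le A cs es \<longleftrightarrow>
     (\<exists>f. precub_map wdim (wface (chain_dims A cs)) (wcells (chain_dims A cs))
                     wdim (wface (chain_dims A es)) (wcells (chain_dims A es)) f \<and>
          (\<forall>x\<in>wcells (chain_dims A cs). chmap A es (f x) = chmap A cs x))"

(* h_c(a) (0-based) and the double order of a cube chain *)
definition hidx :: "(('a \<Rightarrow> cval) \<times> 'a rel) list \<Rightarrow> 'a \<Rightarrow> nat" where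
  "hidx cs a = (THE j. j < length cs \<and> fst (cs ! j) a = CS)"

definition dorder :: "'a set \<Rightarrow> (('a \<Rightarrow> cval) \<times> 'a rel) list \<Rightarrow> 'a rel \<times> 'a rel" where
  "dorder A cs =
     ({(a, b). a \<in> A \<and> b \<in> A \<and> hidx cs a < hidx cs b},
      {(a, b). a \<in> A \<and> b \<in> A \<and> hidx cs a = hidx cs b \<and> (a, b) \<in> snd (cs ! hidx cs a)})"

definition spo_on :: "'a set \<Rightarrow> 'a rel \<Rightarrow> bool" where
  "spo_on A r \<longleftrightarrow> r \<subseteq> A \<times> A \<and> irrefl r \<and> trans r"

fun double_order :: "'a set \<Rightarrow> 'a rel \<times> 'a rel \<Rightarrow> bool" where
  "double_order A (X, Y) \<longleftrightarrow> spo_on A X \<and> spo_on A Y \<and>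
     (\<forall>a\<in>A. \<forall>b\<in>A. a \<noteq> b \<longrightarrow> (a, b) \<in> X \<or> (b, a) \<in> X \<or> (a, b) \<in> Y \<or> (b, a) \<in> Y)"

definition induced_by :: "'a set \<Rightarrow> ('a \<Rightarrow> nat) \<Rightarrow> nat \<Rightarrow> 'a rel \<Rightarrow> bool" where
  "induced_by A h l X \<longleftrightarrow> h ` A = {1..l} \<and> X = {(a, b). a \<in> A \<and> b \<in> A \<and> h a < h b}"

definition semilinear :: "'a set \<Rightarrow> 'a rel \<Rightarrow> bool" where
  "semilinear A X \<longleftrightarrow> (\<exists>h l. induced_by A h l X)"

fun regular :: "'a set \<Rightarrow> 'a rel \<times> 'a rel \<Rightarrow> bool" where
  "regular A (X, Y) \<longleftrightarrow> double_order A (X, Y) \<and> semilinear A X \<and>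
     (\<forall>a b. (a, b) \<in> X \<longrightarrow> (a, b) \<notin> Y \<and> (b, a) \<notin> Y)"

definition regular_dorders :: "'a set \<Rightarrow> ('a rel \<times> 'a rel) set" where
  "regular_dorders A = {d. regular A d}"

fun dle :: "'a rel \<times> 'a rel \<Rightarrow> 'a rel \<times> 'a rel \<Rightarrow> bool" where
  "dle (X1, Y1) (X2, Y2) \<longleftrightarrow> X1 \<subseteq> X2 \<and> Y2 \<subseteq> Y1"

(* the unique surjection h(X) (made unique on the nose by extensionality) *)
definition hfun :: "'a set \<Rightarrow> 'a rel \<Rightarrow> 'a \<Rightarrow> nat" where
  "hfun A X = (THE h. h \<in> extensional A \<and> (\<exists>l. induced_by A h l X))"

fun chain_of :: "'a set \<Rightarrow> 'a rel \<times> 'a rel \<Rightarrow> (('a \<Rightarrow> cval) \<times> 'a rel) list" where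
  "chain_of A (X, Y) =
     (let h = hfun A X; l = card (h ` A) in
      map (\<lambda>j. (restrict (\<lambda>a. if h a < j then C1 else if h a = j then CS else C0) A,
                 Restr Y {a \<in> A. h a = j}))
          [1..<Suc l])"

definition rel_act :: "'a rel \<Rightarrow> ('a \<Rightarrow> 'a) \<Rightarrow> 'a rel" where
  "rel_act r \<sigma> = {(a, b). (\<sigma> a, \<sigma> b) \<in> r}"

fun cube_act :: "('a \<Rightarrow> cval) \<times> 'a rel \<Rightarrow> ('a \<Rightarrow> 'a) \<Rightarrow> ('a \<Rightarrow> cval) \<times> 'a rel" where
  "cube_act (c, r) \<sigma> = (c \<circ> \<sigma>, rel_act r \<sigma>)"

definition chain_act :: "(('a \<Rightarrow> cval) \<times> 'a rel) list \<Rightarrow> ('a \<Rightarrow> 'a) \<Rightarrow> (('a \<Rightarrow> cval) \<times> 'a rel) list" where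
  "chain_act cs \<sigma> = map (\<lambda>y. cube_act y \<sigma>) cs"

fun dorder_act :: "'a rel \<times> 'a rel \<Rightarrow> ('a \<Rightarrow> 'a) \<Rightarrow> 'a rel \<times> 'a rel" where
  "dorder_act (X, Y) \<sigma> = (rel_act X \<sigma>, rel_act Y \<sigma>)"

end

theory Submission
  imports Defs
begin


lemma stot_D:
  assumes "strict_total_on S r"
  shows "r \<subseteq> S \<times> S" "\<And>a. (a,a) \<notin> r" "\<And>a b c. (a,b) \<in> r \<Longrightarrow> (b,c) \<in> r \<Longrightarrow> (a,c) \<in> r"
        "\<And>a b. a \<in> S \<Longrightarrow> b \<in> S \<Longrightarrow> a \<noteq> b \<Longrightarrow> (a,b) \<in> r \<or> (b,a) \<in> r"
  using assms unfolding strict_total_on_def irrefl_on_def trans_def total_on_def by blast+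

lemma yrank_less:
  assumes st: "strict_total_on S r" and fin: "finite S" and a: "a \<in> S" and b: "b \<in> S"
  shows "(a,b) \<in> r \<longleftrightarrow> yrank r a < yrank r b"
proof -
  have mono: "yrank r x < yrank r y" if "(x,y) \<in> r" "y \<in> S" for x y
  proof -
    have "{z. (z,x) \<in> r} \<subset> {z. (z,y) \<in> r}"
      using stot_D[OF st] that by blast
    moreover have "finite {z. (z,y) \<in> r}"
      using stot_D(1)[OF st] fin by (rule_tac finite_subset[of _ S]) auto
    ultimately show ?thesis unfolding yrank_def by (rule psubset_card_mono[rotated])
  qed
  show ?thesis
  proof
    assume "(a,b) \<in> r" then show "yrank r a < yrank r b" using mono b by blast
  next
    assume l: "yrank r a < yrank r b"
    show "(a,b) \<in> r"
    proof (rule ccontr)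
      assume n: "(a,b) \<notin> r"
      have "a \<noteq> b" using l by auto
      then have "(b,a) \<in> r" using stot_D(4)[OF st a b] n by blast
      then show False using mono[of b a] a l by auto
    qed
  qed
qed

lemma yrank_lt_card:
  assumes st: "strict_total_on S r" and fin: "finite S" and a: "a \<in> S"
  shows "yrank r a < card S"
proof -
  have "{z. (z,a) \<in> r} \<subset> S" using stot_D[OF st] a by blast
  then show ?thesis unfolding yrank_def using fin by (rule psubset_card_mono[rotated])
qed

lemma yrank_inj:
  assumes st: "strict_total_on S r" and fin: "finite S"
  shows "inj_on (yrank r) S"
proof (rule inj_onI)
  fix a b assume a: "a \<in> S" and b: "b \<in> S" and e: "yrank r a = yrank r b"
  show "a = b"
  proof (rule ccontr)
    assume "a \<noteq> b"
    then have "(a,b) \<in> r \<or> (b,a) \<in> r" using stot_D(4)[OF st a b] by blast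
    then show False using yrank_less[OF st fin a b] yrank_less[OF st fin b a] e by auto
  qed
qed

lemma yrank_bij:
  assumes st: "strict_total_on S r" and fin: "finite S"
  shows "bij_betw (yrank r) S {0..<card S}"
proof -
  have i: "inj_on (yrank r) S" by (rule yrank_inj[OF st fin])
  have s: "yrank r ` S \<subseteq> {0..<card S}" using yrank_lt_card[OF st fin] by auto
  have "card (yrank r ` S) = card {0..<card S}" using card_image[OF i] by simp
  then have "yrank r ` S = {0..<card S}" using card_subset_eq[OF _ s] by simp
  then show ?thesis using i unfolding bij_betw_def by simp
qed

lemma yrank_surj:
  assumes st: "strict_total_on S r" and fin: "finite S" and k: "k < card S"
  shows "\<exists>a\<in>S. yrank r a = k"
  using yrank_bij[OF st fin] k unfolding bij_betw_def by (metis atLeastLessThan_iff imageE zero_le)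

lemma yrank_the:
  assumes st: "strict_total_on S r" and fin: "finite S" and a: "a \<in> S"
  shows "(THE b. b \<in> S \<and> yrank r b = yrank r a) = a"
  using yrank_inj[OF st fin] a by (intro the_equality) (auto dest: inj_onD)

lemma stot_Restr:
  assumes "strict_total_on S r" "T \<subseteq> S"
  shows "strict_total_on T (Restr r T)"
  using assms unfolding strict_total_on_def irrefl_on_def trans_def total_on_def by blast



lemma ycells_iff: "(c,r) \<in> ycells A \<longleftrightarrow> c \<in> extensional A \<and> strict_total_on (ystars A c) r"
  by (simp add: ycells_def)

lemma ystars_fin: "finite A \<Longrightarrow> finite (ystars A c)"
  unfolding ystars_def by simp

lemma eps_neq [simp]: "eps e \<noteq> CS" "CS \<noteq> eps e"
  by (auto simp: eps_def)

lemma eps_simps [simp]: "eps True = C1" "eps False = C0"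
  by (auto simp: eps_def)

lemma ystars_upd: "a0 \<in> A \<Longrightarrow> v \<noteq> CS \<Longrightarrow> ystars A (c(a0 := v)) = ystars A c - {a0}"
  unfolding ystars_def by auto

lemma yface_eq:
  assumes fin: "finite A" and yc: "(c,r) \<in> ycells A" and i: "1 \<le> i" "i \<le> card (ystars A c)"
  obtains a0 where "a0 \<in> ystars A c" "yrank r a0 = i - 1"
    "yface A (c,r) i e = (c(a0 := eps e), Restr r (ystars A c - {a0}))"
proof -
  have st: "strict_total_on (ystars A c) r" using yc by (simp add: ycells_iff)
  have f: "finite (ystars A c)" using fin by (rule ystars_fin)
  have "i - 1 < card (ystars A c)" using i by simp
  then obtain a0 where a0: "a0 \<in> ystars A c" "yrank r a0 = i - 1"
    using yrank_surj[OF st f, of "i - 1"] by blast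
  have "(THE a. a \<in> ystars A c \<and> yrank r a = i - 1) = a0"
    using yrank_the[OF st f a0(1)] a0(2) by simp
  then have "yface A (c,r) i e = (c(a0 := eps e), Restr r (ystars A c - {a0}))"
    by (simp add: Let_def)
  then show ?thesis using that a0 by blast
qed

lemma yface_iter:
  assumes fin: "finite A"
  shows "(c,r) \<in> ycells A \<Longrightarrow> n = card (ystars A c) \<Longrightarrow>
    ((\<lambda>z. yface A z 1 e) ^^ n) (c,r) = (\<lambda>a. if a \<in> ystars A c then eps e else c a, {})"
proof (induction n arbitrary: c r)
  case 0
  then have "ystars A c = {}" using ystars_fin[OF fin] by simp
  moreover have "r \<subseteq> ystars A c \<times> ystars A c" using 0 by (simp add: ycells_iff strict_total_on_def)
  ultimately show ?case by simp
next
  case (Suc n)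
  obtain a0 where a0: "a0 \<in> ystars A c" "yrank r a0 = 0"
    "yface A (c,r) 1 e = (c(a0 := eps e), Restr r (ystars A c - {a0}))"
    using yface_eq[OF fin Suc.prems(1), of 1 e] Suc.prems(2) by auto
  have a0A: "a0 \<in> A" using a0(1) by (simp add: ystars_def)
  have ys: "ystars A (c(a0 := eps e)) = ystars A c - {a0}" using ystars_upd[OF a0A] by simp
  have yc: "(c(a0 := eps e), Restr r (ystars A c - {a0})) \<in> ycells A"
    using Suc.prems(1) a0A ys stot_Restr[of "ystars A c" r "ystars A c - {a0}"]
    by (auto simp: ycells_iff extensional_def)
  have cn: "n = card (ystars A (c(a0 := eps e)))" using ys Suc.prems(2) a0(1) ystars_fin[OF fin] by simp
  have "((\<lambda>z. yface A z 1 e) ^^ Suc n) (c,r) = ((\<lambda>z. yface A z 1 e) ^^ n) (c(a0 := eps e), Restr r (ystars A c - {a0}))"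
    by (simp only: funpow_Suc_right o_apply a0(3))
  also have "\<dots> = (\<lambda>a. if a \<in> ystars A (c(a0 := eps e)) then eps e else (c(a0 := eps e)) a, {})"
    by (rule Suc.IH[OF yc cn])
  also have "\<dots> = (\<lambda>a. if a \<in> ystars A c then eps e else c a, {})"
    using ys a0(1) by (auto simp: fun_eq_iff)
  finally show ?case .
qed

lemma yd0_eq:
  "finite A \<Longrightarrow> (c,r) \<in> ycells A \<Longrightarrow> yd0 A (c,r) = (\<lambda>a. if a \<in> ystars A c then C0 else c a, {})"
  unfolding yd0_def using yface_iter[of A c r "card (ystars A c)" False] by (simp add: fun_eq_iff)

lemma yd1_eq:
  "finite A \<Longrightarrow> (c,r) \<in> ycells A \<Longrightarrow> yd1 A (c,r) = (\<lambda>a. if a \<in> ystars A c then C1 else c a, {})"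
  unfolding yd1_def using yface_iter[of A c r "card (ystars A c)" True] by (simp add: fun_eq_iff)



definition d0v :: "cval \<Rightarrow> cval" where "d0v v = (if v = CS then C0 else v)"
definition d1v :: "cval \<Rightarrow> cval" where "d1v v = (if v = CS then C1 else v)"

lemma seq_struct:
  fixes v :: "nat \<Rightarrow> cval"
  assumes n: "0 < n" and h0: "d0v (v 0) = C0"
    and hs: "\<And>j. Suc j < n \<Longrightarrow> d1v (v j) = d0v (v (Suc j))"
    and hl: "d1v (v (n - 1)) = C1"
  shows "\<exists>k<n. \<forall>j<n. v j = (if j < k then C0 else if j = k then CS else C1)"
proof -
  have low: "v j = C0" if "j < m" "m \<le> n" "\<forall>i<m. v i \<noteq> CS" for j m
    using that
  proof (induction j)
    case 0 then show ?case using h0 by (auto simp: d0v_def split: if_splits)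
  next
    case (Suc j)
    then have "v j = C0" by auto
    then have "d0v (v (Suc j)) = C0" using hs[of j] Suc.prems by (simp add: d1v_def)
    then show ?case using Suc.prems by (auto simp: d0v_def split: if_splits)
  qed
  have ex: "\<exists>k. k < n \<and> v k = CS"
  proof (rule ccontr)
    assume "\<not> ?thesis"
    then have "v (n - 1) = C0" using low[of "n - 1" n] n by auto
    then show False using hl by (simp add: d1v_def)
  qed
  define k where "k = (LEAST k. k < n \<and> v k = CS)"
  have k: "k < n" "v k = CS" using LeastI_ex[OF ex] unfolding k_def by auto
  have nk: "\<forall>i<k. v i \<noteq> CS" using not_less_Least[of _ "\<lambda>k. k < n \<and> v k = CS"] k(1)
    unfolding k_def by (metis less_trans)
  have hi: "k < j \<longrightarrow> j < n \<longrightarrow> v j = C1" for j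
  proof (induction j)
    case 0 then show ?case by simp
  next
    case (Suc j)
    show ?case
    proof (intro impI)
      assume a: "k < Suc j" "Suc j < n"
      have "d1v (v j) = C1"
      proof (cases "j = k")
        case True then show ?thesis using k by (simp add: d1v_def)
      next
        case False then show ?thesis using Suc.IH a by (simp add: d1v_def)
      qed
      then have "d0v (v (Suc j)) = C1" using hs[of j] a by simp
      then show "v (Suc j) = C1" by (auto simp: d0v_def split: if_splits)
    qed
  qed
  have "\<forall>j<n. v j = (if j < k then C0 else if j = k then CS else C1)"
  proof (intro allI impI)
    fix j assume j: "j < n"
    show "v j = (if j < k then C0 else if j = k then CS else C1)"
      using low[of j k] nk k hi[of j] j by auto
  qed
  then show ?thesis using k by blast
qed

lemma cube_chainsD:
  assumes "cs \<in> cube_chains A"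
  shows "set cs \<subseteq> ycells A" "\<And>y. y \<in> set cs \<Longrightarrow> 0 < ydim A y"
    "cs = [] \<Longrightarrow> yinit A = yfinal A"
    "cs \<noteq> [] \<Longrightarrow> yd0 A (hd cs) = yinit A"
    "cs \<noteq> [] \<Longrightarrow> yd1 A (last cs) = yfinal A"
    "\<And>j. Suc j < length cs \<Longrightarrow> yd1 A (cs ! j) = yd0 A (cs ! Suc j)"
  using assms unfolding cube_chains_def by (auto split: if_splits)

lemma chain_cell:
  assumes "cs \<in> cube_chains A" "j < length cs"
  shows "(fst (cs ! j), snd (cs ! j)) \<in> ycells A"
  using cube_chainsD(1)[OF assms(1)] assms(2) by auto

lemma fst_yd0:
  assumes "finite A" "(c, r) \<in> ycells A" "a \<in> A"
  shows "fst (yd0 A (c,r)) a = d0v (c a)"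
  using assms by (simp add: yd0_eq d0v_def ystars_def)

lemma fst_yd1:
  assumes "finite A" "(c, r) \<in> ycells A" "a \<in> A"
  shows "fst (yd1 A (c,r)) a = d1v (c a)"
  using assms by (simp add: yd1_eq d1v_def ystars_def)

lemma chain_nil:
  assumes cs: "cs \<in> cube_chains A"
  shows "cs = [] \<longleftrightarrow> A = {}"
proof
  assume "cs = []"
  then have "yinit A = yfinal A" using cube_chainsD(3)[OF cs] by simp
  then show "A = {}" unfolding yinit_def yfinal_def by (auto simp: fun_eq_iff restrict_def split: if_splits)
next
  assume A: "A = {}"
  show "cs = []"
  proof (rule ccontr)
    assume "cs \<noteq> []"
    then have "hd cs \<in> set cs" by simp
    then have "0 < ydim A (hd cs)" using cube_chainsD(2)[OF cs] by blast
    moreover have "ydim A (hd cs) = 0" using A by (cases "hd cs") (simp add: ystars_def)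
    ultimately show False by simp
  qed
qed

lemma chain_struct:
  assumes fin: "finite A" and cs: "cs \<in> cube_chains A" and a: "a \<in> A"
  shows "hidx cs a < length cs \<and>
    (\<forall>j<length cs. fst (cs ! j) a = (if hidx cs a < j then C1 else if hidx cs a = j then CS else C0))"
proof -
  define n where "n = length cs"
  define v where "v j = fst (cs ! j) a" for j
  have ne: "cs \<noteq> []" using chain_nil[OF cs] a by auto
  then have n: "0 < n" unfolding n_def by simp
  have hd: "hd cs = cs ! 0" using ne by (simp add: hd_conv_nth)
  have lst: "last cs = cs ! (n - 1)" using ne unfolding n_def by (simp add: last_conv_nth)
  have e0: "d0v (v 0) = C0"
  proof -
    have "fst (yd0 A (cs ! 0)) a = C0" using cube_chainsD(4)[OF cs ne] hd a
      by (simp add: yinit_def)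
    then show ?thesis using fst_yd0[OF fin chain_cell[OF cs, of 0] a] n unfolding v_def n_def by simp
  qed
  have el: "d1v (v (n - 1)) = C1"
  proof -
    have "fst (yd1 A (cs ! (n - 1))) a = C1" using cube_chainsD(5)[OF cs ne] lst a
      by (simp add: yfinal_def)
    then show ?thesis using fst_yd1[OF fin chain_cell[OF cs, of "n - 1"] a] n unfolding v_def n_def by simp
  qed
  have es: "d1v (v j) = d0v (v (Suc j))" if "Suc j < n" for j
  proof -
    have "fst (yd1 A (cs ! j)) a = fst (yd0 A (cs ! Suc j)) a" using cube_chainsD(6)[OF cs] that
      unfolding n_def by simp
    then show ?thesis using fst_yd1[OF fin chain_cell[OF cs, of j] a] fst_yd0[OF fin chain_cell[OF cs, of "Suc j"] a] that
      unfolding v_def n_def by simp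
  qed
  obtain k where k: "k < n" "\<forall>j<n. v j = (if j < k then C0 else if j = k then CS else C1)"
    using seq_struct[OF n e0 es el] by blast
  have "hidx cs a = k"
    unfolding hidx_def
  proof (rule the_equality)
    show "k < length cs \<and> fst (cs ! k) a = CS" using k unfolding v_def n_def by simp
  next
    fix j assume "j < length cs \<and> fst (cs ! j) a = CS"
    then show "j = k" using k(2)[rule_format, of j] unfolding v_def n_def by (auto split: if_splits)
  qed
  then show ?thesis using k unfolding v_def n_def by auto
qed

definition cv :: "'a set \<Rightarrow> ('a \<Rightarrow> nat) \<Rightarrow> nat \<Rightarrow> 'a \<Rightarrow> cval" where
  "cv A h j = restrict (\<lambda>a. if h a < j then C1 else if h a = j then CS else C0) A"

lemma chain_hidx_lt:
  "finite A \<Longrightarrow> cs \<in> cube_chains A \<Longrightarrow> a \<in> A \<Longrightarrow> hidx cs a < length cs"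
  by (rule conjunct1[OF chain_struct])

lemma chain_fst:
  assumes fin: "finite A" and cs: "cs \<in> cube_chains A" and j: "j < length cs"
  shows "fst (cs ! j) = cv A (hidx cs) j"
proof
  fix a
  show "fst (cs ! j) a = cv A (hidx cs) j a"
  proof (cases "a \<in> A")
    case True then show ?thesis using chain_struct[OF fin cs True] j by (simp add: cv_def)
  next
    case False
    have "fst (cs ! j) \<in> extensional A" using chain_cell[OF cs j] by (cases "cs ! j") (simp add: ycells_iff)
    then show ?thesis using False by (simp add: cv_def extensional_def)
  qed
qed

lemma ystars_cv: "ystars A (cv A h j) = {a \<in> A. h a = j}"
  by (auto simp: ystars_def cv_def)

lemma chain_ystars:
  "finite A \<Longrightarrow> cs \<in> cube_chains A \<Longrightarrow> j < length cs \<Longrightarrow> ystars A (fst (cs ! j)) = {a \<in> A. hidx cs a = j}"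
  by (simp add: chain_fst ystars_cv)

lemma chain_level_ne:
  assumes fin: "finite A" and cs: "cs \<in> cube_chains A" and j: "j < length cs"
  shows "\<exists>a\<in>A. hidx cs a = j"
proof -
  have "0 < ydim A (cs ! j)" using cube_chainsD(2)[OF cs] j by simp
  then have "0 < card (ystars A (fst (cs ! j)))" by (cases "cs ! j") simp
  then have "ystars A (fst (cs ! j)) \<noteq> {}" by auto
  then show ?thesis using chain_ystars[OF fin cs j] by auto
qed

lemma chain_snd:
  assumes fin: "finite A" and cs: "cs \<in> cube_chains A" and j: "j < length cs"
  shows "strict_total_on {a \<in> A. hidx cs a = j} (snd (cs ! j))"
  using chain_cell[OF cs j] chain_ystars[OF fin cs j] by (cases "cs ! j") (simp add: ycells_iff)

lemma chain_nth:
  assumes fin: "finite A" and cs: "cs \<in> cube_chains A" and j: "j < length cs"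
  shows "cs ! j = (cv A (hidx cs) j, snd (cs ! j))"
  using chain_fst[OF fin cs j] by (metis prod.collapse)



lemma induced_unique_aux:
  assumes ih: "induced_by A h l X" and ih': "induced_by A h' l' X"
  shows "\<forall>a\<in>A. h a = k \<longrightarrow> h' a = k"
proof (induction k rule: less_induct)
  case (less k)
  have rg: "h ` A = {1..l}" and rg': "h' ` A = {1..l'}"
    and X: "X = {(a, b). a \<in> A \<and> b \<in> A \<and> h a < h b}"
    and X': "X = {(a, b). a \<in> A \<and> b \<in> A \<and> h' a < h' b}"
    using ih ih' unfolding induced_by_def by auto
  have below: "\<And>b. b \<in> A \<Longrightarrow> h b < k \<Longrightarrow> h' b = h b" using less.IH by blast
  show ?case
  proof (intro ballI impI)
    fix a assume a: "a \<in> A" and hk: "h a = k"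
    have k1: "1 \<le> k" "k \<le> l" using rg a hk by auto
    have m1: "1 \<le> h' a" "h' a \<le> l'" using rg' a by auto
    have ge: "k \<le> h' a"
    proof (cases "k = 1")
      case True then show ?thesis using m1 by simp
    next
      case False
      then have "k - 1 \<in> h ` A" using rg k1 by auto
      then obtain b where b: "b \<in> A" "h b = k - 1" by auto
      have "h' b = k - 1" using below[OF b(1)] b(2) k1 by simp
      moreover have "(b, a) \<in> X" using X b a hk k1 False by auto
      ultimately show ?thesis using X' by auto
    qed
    have le: "h' a \<le> k"
    proof (cases "h' a = 1")
      case True then show ?thesis using k1 by simp
    next
      case False
      then have "h' a - 1 \<in> h' ` A" using rg' m1 by auto
      then obtain b where b: "b \<in> A" "h' b = h' a - 1" by auto
      have "(b, a) \<in> X" using X' b a m1 False by auto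
      then have "h b < k" using X hk by auto
      then have "h' b = h b" using below b(1) by blast
      then show ?thesis using b(2) \<open>h b < k\<close> by linarith
    qed
    show "h' a = k" using ge le by simp
  qed
qed

lemma induced_unique:
  "induced_by A h l X \<Longrightarrow> induced_by A h' l' X \<Longrightarrow> a \<in> A \<Longrightarrow> h' a = h a"
  using induced_unique_aux by blast

lemma hfun_eq:
  assumes "h \<in> extensional A" "induced_by A h l X"
  shows "hfun A X = h"
  unfolding hfun_def
proof (rule the_equality)
  show "h \<in> extensional A \<and> (\<exists>l. induced_by A h l X)" using assms by blast
next
  fix g assume g: "g \<in> extensional A \<and> (\<exists>l. induced_by A g l X)"
  then obtain l' where l': "induced_by A g l' X" by blast
  show "g = h"
  proof
    fix a show "g a = h a"
      using induced_unique[OF assms(2) l', of a] g assms(1) by (cases "a \<in> A") (auto simp: extensional_def)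
  qed
qed

lemma induced_restrict: "induced_by A h l X \<Longrightarrow> induced_by A (restrict h A) l X"
  unfolding induced_by_def by auto

lemma induced_card: "induced_by A h l X \<Longrightarrow> card (h ` A) = l"
  unfolding induced_by_def by simp

lemma dorder_eq: "dorder A cs = (X, Y) \<longleftrightarrow>
   X = {(a, b). a \<in> A \<and> b \<in> A \<and> hidx cs a < hidx cs b} \<and>
   Y = {(a, b). a \<in> A \<and> b \<in> A \<and> hidx cs a = hidx cs b \<and> (a, b) \<in> snd (cs ! hidx cs a)}"
  unfolding dorder_def by auto

lemma conj1:
  assumes fin: "finite A" and cs: "cs \<in> cube_chains A"
  shows "dorder A cs \<in> regular_dorders A \<and> chain_of A (dorder A cs) = cs"
proof -
  define p where "p = hidx cs"
  define n where "n = length cs"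
  define X where "X = {(a, b). a \<in> A \<and> b \<in> A \<and> p a < p b}"
  define Y where "Y = {(a, b). a \<in> A \<and> b \<in> A \<and> p a = p b \<and> (a, b) \<in> snd (cs ! p a)}"
  have d: "dorder A cs = (X, Y)" unfolding dorder_eq X_def Y_def p_def by simp
  have plt: "\<And>a. a \<in> A \<Longrightarrow> p a < n" unfolding p_def n_def using chain_hidx_lt[OF fin cs] by blast
  have st: "\<And>j. j < n \<Longrightarrow> strict_total_on {a \<in> A. p a = j} (snd (cs ! j))"
    unfolding p_def n_def using chain_snd[OF fin cs] by blast
  define h where "h = restrict (\<lambda>a. p a + 1) A"
  have ind: "induced_by A h n X"
  proof -
    have "h ` A = {1..n}"
    proof
      show "h ` A \<subseteq> {1..n}" using plt by (auto simp: h_def Suc_le_eq)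
    next
      show "{1..n} \<subseteq> h ` A"
      proof
        fix k assume k: "k \<in> {1..n}"
        then have "k - 1 < length cs" unfolding n_def by auto
        then obtain a where "a \<in> A" "p a = k - 1"
          using chain_level_ne[OF fin cs, of "k - 1"] unfolding p_def by blast
        then show "k \<in> h ` A" using k unfolding h_def by (auto intro!: image_eqI[of _ _ a])
      qed
    qed
    moreover have "X = {(a, b). a \<in> A \<and> b \<in> A \<and> h a < h b}" unfolding X_def h_def by auto
    ultimately show ?thesis unfolding induced_by_def by simp
  qed
  have reg: "regular A (X, Y)"
  proof -
    have spoX: "spo_on A X" unfolding spo_on_def X_def irrefl_on_def trans_def by auto
    have spoY: "spo_on A Y"
      unfolding spo_on_def
    proof (intro conjI)
      show "Y \<subseteq> A \<times> A" unfolding Y_def by auto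
      show "irrefl Y" unfolding irrefl_on_def Y_def using st plt by (auto dest: stot_D(2))
      show "trans Y" unfolding trans_def Y_def
      proof (clarsimp)
        fix x y z assume "x \<in> A" "y \<in> A" "z \<in> A" "p x = p z" "p y = p z"
          "(x, y) \<in> snd (cs ! p z)" "(y, z) \<in> snd (cs ! p z)"
        then show "(x, z) \<in> snd (cs ! p z)" using stot_D(3)[OF st[OF plt[of z]]] by blast
      qed
    qed
    have tot: "\<forall>a\<in>A. \<forall>b\<in>A. a \<noteq> b \<longrightarrow> (a, b) \<in> X \<or> (b, a) \<in> X \<or> (a, b) \<in> Y \<or> (b, a) \<in> Y"
    proof (intro ballI impI)
      fix a b assume a: "a \<in> A" and b: "b \<in> A" and ab: "a \<noteq> b"
      show "(a, b) \<in> X \<or> (b, a) \<in> X \<or> (a, b) \<in> Y \<or> (b, a) \<in> Y"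
      proof (cases "p a = p b")
        case True
        then have "(a, b) \<in> snd (cs ! p a) \<or> (b, a) \<in> snd (cs ! p a)"
          using stot_D(4)[OF st[OF plt[OF a]], of a b] a b ab by auto
        then show ?thesis unfolding Y_def using a b True by auto
      next
        case False then show ?thesis unfolding X_def using a b by auto
      qed
    qed
    have sl: "semilinear A X" unfolding semilinear_def using ind by blast
    have "\<forall>a b. (a, b) \<in> X \<longrightarrow> (a, b) \<notin> Y \<and> (b, a) \<notin> Y" unfolding X_def Y_def by auto
    then show ?thesis using spoX spoY tot sl by simp
  qed
  have hf: "hfun A X = h" using hfun_eq[OF _ ind] unfolding h_def by simp
  have cl: "card (h ` A) = n" using induced_card[OF ind] .
  have "chain_of A (X, Y) = cs"
  proof -
    have "chain_of A (X, Y) = map (\<lambda>j. (cv A h j, Restr Y {a \<in> A. h a = j})) [1..<Suc n]"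
      using hf cl by (simp add: Let_def cv_def)
    also have "\<dots> = cs"
    proof (rule nth_equalityI)
      show "length (map (\<lambda>j. (cv A h j, Restr Y {a \<in> A. h a = j})) [1..<Suc n]) = length cs"
        unfolding n_def by (simp del: upt_Suc)
    next
      fix i assume "i < length (map (\<lambda>j. (cv A h j, Restr Y {a \<in> A. h a = j})) [1..<Suc n])"
      then have i: "i < n" by (simp del: upt_Suc)
      have e1: "cv A h (Suc i) = cv A p i" unfolding cv_def h_def by (auto simp: fun_eq_iff)
      have e2: "Restr Y {a \<in> A. h a = Suc i} = snd (cs ! i)"
      proof -
        have "snd (cs ! i) \<subseteq> {a \<in> A. p a = i} \<times> {a \<in> A. p a = i}"
          using st[OF i] by (simp add: strict_total_on_def)
        then show ?thesis unfolding Y_def h_def by auto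
      qed
      have "cs ! i = (cv A p i, snd (cs ! i))" using chain_nth[OF fin cs] i unfolding p_def n_def by blast
      then show "map (\<lambda>j. (cv A h j, Restr Y {a \<in> A. h a = j})) [1..<Suc n] ! i = cs ! i"
        using i e1 e2 by (simp add: nth_upt del: upt_Suc)
    qed
    finally show ?thesis .
  qed
  then show ?thesis using d reg by (simp add: regular_dorders_def)
qed



lemma restrict_empty_eq: "restrict f {} = restrict g {}"
  by (simp add: restrict_def)

lemma cv_ext: "cv A h j \<in> extensional A"
  by (simp add: cv_def)

lemma conj2:
  assumes fin: "finite A" and reg: "regular A (X, Y)"
  shows "chain_of A (X, Y) \<in> cube_chains A \<and> dorder A (chain_of A (X, Y)) = (X, Y)"
proof -
  have spoX: "spo_on A X" and spoY: "spo_on A Y"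
    and tot: "\<forall>a\<in>A. \<forall>b\<in>A. a \<noteq> b \<longrightarrow> (a, b) \<in> X \<or> (b, a) \<in> X \<or> (a, b) \<in> Y \<or> (b, a) \<in> Y"
    and sl: "semilinear A X" and rg: "\<forall>a b. (a, b) \<in> X \<longrightarrow> (a, b) \<notin> Y \<and> (b, a) \<notin> Y"
    using reg by auto
  obtain h0 l where ind0: "induced_by A h0 l X" using sl unfolding semilinear_def by blast
  define h where "h = restrict h0 A"
  have ind: "induced_by A h l X" unfolding h_def by (rule induced_restrict[OF ind0])
  have hf: "hfun A X = h" using hfun_eq[OF _ ind] unfolding h_def by simp
  have cl: "card (h ` A) = l" using induced_card[OF ind] .
  have rgh: "h ` A = {1..l}" and Xh: "X = {(a, b). a \<in> A \<and> b \<in> A \<and> h a < h b}"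
    using ind unfolding induced_by_def by auto
  have hpos: "\<And>a. a \<in> A \<Longrightarrow> 1 \<le> h a \<and> h a \<le> l" using rgh by auto
  have YA: "Y \<subseteq> A \<times> A" using spoY unfolding spo_on_def by blast
  have Ysame: "\<And>a b. (a, b) \<in> Y \<Longrightarrow> a \<in> A \<and> b \<in> A \<and> h a = h b"
  proof -
    fix a b assume ab: "(a, b) \<in> Y"
    then have a: "a \<in> A" "b \<in> A" using YA by auto
    have "\<not> h a < h b" using rg Xh ab a by blast
    moreover have "\<not> h b < h a" using rg Xh ab a by blast
    ultimately show "a \<in> A \<and> b \<in> A \<and> h a = h b" using a by simp
  qed
  have Yirr: "\<And>a. (a, a) \<notin> Y" using spoY unfolding spo_on_def irrefl_on_def by blast
  have Ytr: "\<And>a b c. (a, b) \<in> Y \<Longrightarrow> (b, c) \<in> Y \<Longrightarrow> (a, c) \<in> Y"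
    using spoY unfolding spo_on_def trans_def by blast
  have Ystot: "\<And>j. strict_total_on {a \<in> A. h a = j} (Restr Y {a \<in> A. h a = j})"
  proof -
    fix j
    show "strict_total_on {a \<in> A. h a = j} (Restr Y {a \<in> A. h a = j})"
      unfolding strict_total_on_def
    proof (intro conjI)
      show "Restr Y {a \<in> A. h a = j} \<subseteq> {a \<in> A. h a = j} \<times> {a \<in> A. h a = j}" by auto
      show "irrefl (Restr Y {a \<in> A. h a = j})" using Yirr unfolding irrefl_on_def by auto
      show "trans (Restr Y {a \<in> A. h a = j})" using Ytr unfolding trans_def by blast
      show "total_on {a \<in> A. h a = j} (Restr Y {a \<in> A. h a = j})"
        unfolding total_on_def
      proof (intro ballI impI)
        fix a b assume a: "a \<in> {a \<in> A. h a = j}" and b: "b \<in> {a \<in> A. h a = j}" and ab: "a \<noteq> b"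
        have "(a, b) \<notin> X" "(b, a) \<notin> X" using a b Xh by auto
        then show "(a, b) \<in> Restr Y {a \<in> A. h a = j} \<or> (b, a) \<in> Restr Y {a \<in> A. h a = j}"
          using tot a b ab by auto
      qed
    qed
  qed
  define F where "F j = (cv A h j, Restr Y {a \<in> A. h a = j})" for j
  define cs where "cs = map F [1..<Suc l]"
  have co: "chain_of A (X, Y) = cs" unfolding cs_def F_def using hf cl by (simp add: Let_def cv_def)
  have len: "length cs = l" unfolding cs_def by (simp del: upt_Suc)
  have nth: "\<And>i. i < l \<Longrightarrow> cs ! i = F (Suc i)" unfolding cs_def by (simp add: nth_upt del: upt_Suc)
  have Fcell: "\<And>j. F j \<in> ycells A"
    unfolding F_def using Ystot by (simp add: ycells_iff ystars_cv cv_ext)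
  have yd0F: "\<And>j. yd0 A (F j) = (\<lambda>a. if a \<in> A \<and> h a = j then C0 else cv A h j a, {})"
    using Fcell unfolding F_def by (simp add: yd0_eq[OF fin] ystars_cv)
  have yd1F: "\<And>j. yd1 A (F j) = (\<lambda>a. if a \<in> A \<and> h a = j then C1 else cv A h j a, {})"
    using Fcell unfolding F_def by (simp add: yd1_eq[OF fin] ystars_cv)
  have chain: "cs \<in> cube_chains A"
    unfolding cube_chains_def
  proof (intro CollectI conjI)
    show "set cs \<subseteq> ycells A" unfolding cs_def using Fcell by auto
    show "\<forall>y\<in>set cs. 0 < ydim A y"
    proof
      fix y assume "y \<in> set cs"
      then obtain j where j: "j \<in> {1..l}" "y = F j" unfolding cs_def by (force simp del: upt_Suc)
      then obtain a where "a \<in> A" "h a = j" using rgh by (metis imageE)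
      then have "ystars A (cv A h j) \<noteq> {}" by (auto simp: ystars_cv)
      moreover have "finite (ystars A (cv A h j))" using ystars_fin[OF fin] .
      ultimately show "0 < ydim A y" unfolding j F_def by (simp add: card_gt_0_iff)
    qed
    show "if cs = [] then yinit A = yfinal A
       else yd0 A (hd cs) = yinit A \<and> yd1 A (last cs) = yfinal A"
    proof (cases "cs = []")
      case True
      then have "l = 0" using len by simp
      then have "A = {}" using hpos by fastforce
      then show ?thesis using True by (simp add: yinit_def yfinal_def restrict_def)
    next
      case False
      then have l: "0 < l" using len by (metis length_greater_0_conv)
      have "hd cs = F 1" using nth[of 0] l False by (simp add: hd_conv_nth)
      moreover have "last cs = F l" using nth[of "l - 1"] l False len by (simp add: last_conv_nth)
      moreover have "yd0 A (F 1) = yinit A"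
        unfolding yd0F yinit_def by (auto simp: fun_eq_iff cv_def dest: hpos)
      moreover have "yd1 A (F l) = yfinal A"
        unfolding yd1F yfinal_def by (auto simp: fun_eq_iff cv_def dest: hpos)
      ultimately show ?thesis using False by simp
    qed
    show "\<forall>j. Suc j < length cs \<longrightarrow> yd1 A (cs ! j) = yd0 A (cs ! Suc j)"
    proof (intro allI impI)
      fix j assume j: "Suc j < length cs"
      then have "cs ! j = F (Suc j)" "cs ! Suc j = F (Suc (Suc j))" using nth len by auto
      then show "yd1 A (cs ! j) = yd0 A (cs ! Suc j)"
        by (auto simp: yd0F yd1F fun_eq_iff cv_def)
    qed
  qed
  have hidx: "\<And>a. a \<in> A \<Longrightarrow> hidx cs a = h a - 1"
  proof -
    fix a assume a: "a \<in> A"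
    show "hidx cs a = h a - 1"
      unfolding hidx_def
    proof (rule the_equality)
      show "h a - 1 < length cs \<and> fst (cs ! (h a - 1)) a = CS"
        using hpos[OF a] nth[of "h a - 1"] len a by (auto simp: F_def cv_def)
    next
      fix j assume j: "j < length cs \<and> fst (cs ! j) a = CS"
      then show "j = h a - 1" using nth[of j] len a by (auto simp: F_def cv_def split: if_splits)
    qed
  qed
  have "dorder A cs = (X, Y)"
    unfolding dorder_eq
  proof
    show "X = {(a, b). a \<in> A \<and> b \<in> A \<and> hidx cs a < hidx cs b}"
      unfolding Xh using hidx hpos by fastforce
  next
    have "snd (cs ! hidx cs a) = Restr Y {b \<in> A. h b = h a}" if a: "a \<in> A" for a
    proof -
      have "h a - 1 < l" "Suc (h a - 1) = h a" using hpos[OF a] by auto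
      then show ?thesis using hidx[OF a] nth[of "h a - 1"] by (simp add: F_def)
    qed
    then show "Y = {(a, b). a \<in> A \<and> b \<in> A \<and> hidx cs a = hidx cs b \<and> (a, b) \<in> snd (cs ! hidx cs a)}"
      using Ysame hidx hpos by fastforce
  qed
  then show ?thesis using chain co by simp
qed



abbreviation nst :: "cval list \<Rightarrow> nat" where "nst x \<equiv> length (filter (\<lambda>v. v = CS) x)"

lemma length_repl_star [simp]: "length (repl_star x i v) = length x"
  by (induction x arbitrary: i) auto

lemma repl_star_ex:
  "1 \<le> i \<Longrightarrow> i \<le> nst x \<Longrightarrow>
   \<exists>m<length x. x ! m = CS \<and> nst (take m x) = i - 1 \<and> repl_star x i v = x[m := v]"
proof (induction x arbitrary: i)
  case Nil then show ?case by simp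
next
  case (Cons w xs)
  show ?case
  proof (cases "w = CS")
    case True
    show ?thesis
    proof (cases "i = 1")
      case True
      have "repl_star (w # xs) i v = v # xs" using \<open>w = CS\<close> True by simp
      then show ?thesis using \<open>w = CS\<close> True by (intro exI[of _ 0]) simp
    next
      case False
      then have "1 \<le> i - 1" "i - 1 \<le> nst xs" using Cons.prems True by auto
      then obtain m where m: "m < length xs" "xs ! m = CS" "nst (take m xs) = i - 1 - 1"
        "repl_star xs (i - 1) v = xs[m := v]" using Cons.IH by blast
      have "repl_star (w # xs) i v = w # xs[m := v]" using True False m(4) by simp
      moreover have "nst (take (Suc m) (w # xs)) = i - 1" using True m(3) \<open>1 \<le> i - 1\<close> by simp
      ultimately show ?thesis using m(1,2) by (intro exI[of _ "Suc m"]) simp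
    qed
  next
    case False
    then have "1 \<le> i" "i \<le> nst xs" using Cons.prems by auto
    then obtain m where m: "m < length xs" "xs ! m = CS" "nst (take m xs) = i - 1"
      "repl_star xs i v = xs[m := v]" using Cons.IH by blast
    have "repl_star (w # xs) i v = w # xs[m := v]" using False m(4) by simp
    moreover have "nst (take (Suc m) (w # xs)) = i - 1" using False m(3) by simp
    ultimately show ?thesis using m(1,2) by (intro exI[of _ "Suc m"]) simp
  qed
qed

lemma nst_take_card: "m \<le> length x \<Longrightarrow> nst (take m x) = card {j. j < m \<and> x ! j = CS}"
proof -
  assume m: "m \<le> length x"
  then have "nst (take m x) = card {i. i < m \<and> take m x ! i = CS}"
    by (simp add: length_filter_conv_card min_def)
  also have "{i. i < m \<and> take m x ! i = CS} = {j. j < m \<and> x ! j = CS}" by auto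
  finally show ?thesis .
qed

lemma yapply_eq:
  "yapply A (c, r) x = ((\<lambda>a. if a \<in> ystars A c then x ! yrank r a else c a),
      Restr r {a \<in> ystars A c. x ! yrank r a = CS})"
  by simp

lemma ya_ystars:
  assumes yc: "(c, r) \<in> ycells A"
  shows "ystars A (fst (yapply A (c, r) x)) = {a \<in> ystars A c. x ! yrank r a = CS}"
  by (auto simp: ystars_def)

lemma ya_ext:
  assumes yc: "(c, r) \<in> ycells A"
  shows "fst (yapply A (c, r) x) \<in> extensional A"
  using yc by (auto simp: ycells_iff extensional_def ystars_def)

lemma rank_image:
  assumes fin: "finite A" and yc: "(c, r) \<in> ycells A"
  shows "yrank r ` {a \<in> ystars A c. P (yrank r a)} = {m. m < card (ystars A c) \<and> P m}"
proof -
  have st: "strict_total_on (ystars A c) r" using yc by (simp add: ycells_iff)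
  have b: "bij_betw (yrank r) (ystars A c) {0..<card (ystars A c)}" by (rule yrank_bij[OF st ystars_fin[OF fin]])
  show ?thesis
  proof
    show "yrank r ` {a \<in> ystars A c. P (yrank r a)} \<subseteq> {m. m < card (ystars A c) \<and> P m}"
      using b by (auto simp: bij_betw_def)
  next
    show "{m. m < card (ystars A c) \<and> P m} \<subseteq> yrank r ` {a \<in> ystars A c. P (yrank r a)}"
    proof
      fix m assume "m \<in> {m. m < card (ystars A c) \<and> P m}"
      then obtain a where "a \<in> ystars A c" "yrank r a = m" "P m"
        using yrank_surj[OF st ystars_fin[OF fin]] by blast
      then show "m \<in> yrank r ` {a \<in> ystars A c. P (yrank r a)}" by blast
    qed
  qed
qed

lemma rank_card:
  assumes fin: "finite A" and yc: "(c, r) \<in> ycells A"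
  shows "card {a \<in> ystars A c. P (yrank r a)} = card {m. m < card (ystars A c) \<and> P m}"
proof -
  have st: "strict_total_on (ystars A c) r" using yc by (simp add: ycells_iff)
  have "inj_on (yrank r) {a \<in> ystars A c. P (yrank r a)}"
    using yrank_inj[OF st ystars_fin[OF fin]] by (rule inj_on_subset) auto
  then have "card (yrank r ` {a \<in> ystars A c. P (yrank r a)}) = card {a \<in> ystars A c. P (yrank r a)}"
    by (rule card_image)
  then show ?thesis using rank_image[OF fin yc, of P] by simp
qed

lemma ya_dim:
  assumes fin: "finite A" and yc: "(c, r) \<in> ycells A" and len: "length x = card (ystars A c)"
  shows "ydim A (yapply A (c, r) x) = nst x"
proof -
  have "ydim A (yapply A (c, r) x) = card {a \<in> ystars A c. x ! yrank r a = CS}"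
    using ya_ystars[OF yc, of x] by (simp del: yapply.simps add: yapply_eq)
  also have "\<dots> = card {m. m < card (ystars A c) \<and> x ! m = CS}"
    by (rule rank_card[OF fin yc])
  also have "\<dots> = nst x" using len by (simp add: length_filter_conv_card)
  finally show ?thesis .
qed

lemma ya_repl:
  assumes yc: "(c, r) \<in> ycells A" and fin: "finite A"
  shows "yapply A (c, r) (replicate (card (ystars A c)) v) =
     ((\<lambda>a. if a \<in> ystars A c then v else c a), if v = CS then r else {})"
proof -
  have st: "strict_total_on (ystars A c) r" using yc by (simp add: ycells_iff)
  have lt: "\<And>a. a \<in> ystars A c \<Longrightarrow> yrank r a < card (ystars A c)"
    using yrank_lt_card[OF st ystars_fin[OF fin]] by blast
  have rs: "r \<subseteq> ystars A c \<times> ystars A c" using st by (simp add: strict_total_on_def)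
  show ?thesis using lt rs by (auto simp: fun_eq_iff)
qed

lemma ya_top:
  assumes yc: "(c, r) \<in> ycells A" and fin: "finite A"
  shows "yapply A (c, r) (replicate (card (ystars A c)) CS) = (c, r)"
  using ya_repl[OF yc fin, of CS] by (auto simp: fun_eq_iff ystars_def)

lemma ystars_ya: "ystars A (\<lambda>a. if a \<in> ystars A c then x ! yrank r a else c a) = {a \<in> ystars A c. x ! yrank r a = CS}"
proof (rule set_eqI)
  fix a
  show "a \<in> ystars A (\<lambda>a. if a \<in> ystars A c then x ! yrank r a else c a) \<longleftrightarrow> a \<in> {a \<in> ystars A c. x ! yrank r a = CS}"
    by (cases "a \<in> A"; cases "c a = CS") (simp_all add: ystars_def)
qed

lemma ya_face:
  assumes fin: "finite A" and yc: "(c, r) \<in> ycells A" and len: "length x = card (ystars A c)"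
    and i: "1 \<le> i" "i \<le> nst x"
  shows "yface A (yapply A (c, r) x) i e = yapply A (c, r) (repl_star x i (eps e))"
proof -
  define S where "S = ystars A c"
  define rk where "rk = yrank r"
  have st: "strict_total_on S r" using yc by (simp add: ycells_iff S_def)
  have fS: "finite S" unfolding S_def by (rule ystars_fin[OF fin])
  obtain m where m: "m < length x" "x ! m = CS" "nst (take m x) = i - 1"
    "repl_star x i (eps e) = x[m := eps e]" using repl_star_ex[OF i] by blast
  obtain a0 where a0: "a0 \<in> S" "rk a0 = m" using yrank_surj[OF st fS, of m] m len
    unfolding rk_def S_def by auto
  define T where "T = {a \<in> S. x ! rk a = CS}"
  have a0T: "a0 \<in> T" using a0 m unfolding T_def by simp
  define c' where "c' = (\<lambda>a. if a \<in> S then x ! rk a else c a)"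
  have ya: "yapply A (c, r) x = (c', Restr r T)" unfolding c'_def T_def S_def rk_def by simp
  have ys: "ystars A c' = T" unfolding c'_def T_def S_def rk_def by (rule ystars_ya)
  have TS: "T \<subseteq> S" unfolding T_def by blast
  have stT: "strict_total_on T (Restr r T)" by (rule stot_Restr[OF st TS])
  have fT: "finite T" using fS unfolding T_def by simp
  have rkl: "\<And>a b. a \<in> S \<Longrightarrow> b \<in> S \<Longrightarrow> (a, b) \<in> r \<longleftrightarrow> rk a < rk b"
    using yrank_less[OF st fS] unfolding rk_def by blast
  have rank0: "yrank (Restr r T) a0 = i - 1"
  proof -
    have "{b. (b, a0) \<in> Restr r T} = {b \<in> S. (x ! rk b = CS \<and> rk b < m)}"
      using a0T a0 rkl unfolding T_def by auto
    then have "yrank (Restr r T) a0 = card {b \<in> S. (x ! rk b = CS \<and> rk b < m)}"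
      unfolding yrank_def by simp
    also have "\<dots> = card {j. j < card S \<and> (x ! j = CS \<and> j < m)}"
      using rank_card[OF fin yc, of "\<lambda>j. x ! j = CS \<and> j < m"] unfolding S_def rk_def by simp
    also have "{j. j < card S \<and> (x ! j = CS \<and> j < m)} = {j. j < m \<and> x ! j = CS}"
      using m(1) len unfolding S_def by auto
    also have "card \<dots> = i - 1" using m(3) nst_take_card[of m x] m(1) by simp
    finally show ?thesis .
  qed
  have the0: "(THE a. a \<in> ystars A c' \<and> yrank (Restr r T) a = i - 1) = a0"
    using yrank_the[OF stT fT a0T] rank0 ys by simp
  have lhs: "yface A (yapply A (c, r) x) i e = (c'(a0 := eps e), Restr (Restr r T) (T - {a0}))"
    using ya the0 ys by (simp add: Let_def)
  have inj: "\<And>a. a \<in> S \<Longrightarrow> rk a = m \<longleftrightarrow> a = a0"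
    using yrank_inj[OF st fS] a0 unfolding rk_def by (metis inj_onD)
  have ltS: "\<And>a. a \<in> S \<Longrightarrow> rk a < length x"
    using yrank_lt_card[OF st fS] len unfolding rk_def S_def by simp
  have rhs: "yapply A (c, r) (x[m := eps e]) =
      ((\<lambda>a. if a \<in> S then x[m := eps e] ! rk a else c a), Restr r {a \<in> S. x[m := eps e] ! rk a = CS})"
    unfolding S_def rk_def by simp
  have upd: "\<And>a. a \<in> S \<Longrightarrow> x[m := eps e] ! rk a = (if a = a0 then eps e else x ! rk a)"
  proof -
    fix a assume a: "a \<in> S"
    show "x[m := eps e] ! rk a = (if a = a0 then eps e else x ! rk a)"
      using inj[OF a] ltS[OF a] a0(2) m(1) by (cases "a = a0") (auto simp: nth_list_update)
  qed
  have e1: "(\<lambda>a. if a \<in> S then x[m := eps e] ! rk a else c a) = c'(a0 := eps e)"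
  proof
    fix a show "(if a \<in> S then x[m := eps e] ! rk a else c a) = (c'(a0 := eps e)) a"
      using upd[of a] a0 unfolding c'_def by auto
  qed
  have e2: "{a \<in> S. x[m := eps e] ! rk a = CS} = T - {a0}"
    using upd a0 unfolding T_def by (auto split: if_splits)
  show ?thesis using lhs rhs e1 e2 m(4) by auto
qed



lemma chain_cube: "cs \<in> cube_chains A \<Longrightarrow> j < length cs \<Longrightarrow> cs ! j \<in> ycells A"
  using cube_chainsD(1) nth_mem by blast

lemma ydim_card: "ydim A y = card (ystars A (fst y))"
  by (cases y) simp

lemma ya_rep0:
  assumes "finite A" "(c, r) \<in> ycells A"
  shows "yapply A (c, r) (replicate (card (ystars A c)) C0) = yd0 A (c, r)"
  using ya_repl[OF assms(2,1), of C0] yd0_eq[OF assms] by simp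

lemma ya_rep1:
  assumes "finite A" "(c, r) \<in> ycells A"
  shows "yapply A (c, r) (replicate (card (ystars A c)) C1) = yd1 A (c, r)"
  using ya_repl[OF assms(2,1), of C1] yd1_eq[OF assms] by simp

lemma wcells_iff:
  assumes "ns \<noteq> []"
  shows "(j, x) \<in> wcells ns \<longleftrightarrow> j < length ns \<and> length x = ns ! j \<and> \<not> (Suc j < length ns \<and> x = replicate (ns ! j) C1)"
  using assms by (simp add: wcells_def)

lemma dims_nth: "j < length cs \<Longrightarrow> chain_dims A cs ! j = card (ystars A (fst (cs ! j)))"
  by (simp add: chain_dims_def ydim_card)

lemma dims_len [simp]: "length (chain_dims A cs) = length cs"
  by (simp add: chain_dims_def)

lemma chmap_eq: "cs \<noteq> [] \<Longrightarrow> chmap A cs (j, x) = yapply A (cs ! j) x"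
  by simp

lemma W_all:
  assumes fin: "finite A" and cs: "cs \<in> cube_chains A" and ne: "cs \<noteq> []"
    and y: "(j, x) \<in> wcells (chain_dims A cs)" and i: "1 \<le> i" "i \<le> wdim (j, x)"
  shows "wface (chain_dims A cs) (j, x) i e \<in> wcells (chain_dims A cs) \<and>
         chmap A cs (wface (chain_dims A cs) (j, x) i e) = yface A (chmap A cs (j, x)) i e"
proof -
  define ns where "ns = chain_dims A cs"
  have nsne: "ns \<noteq> []" using ne unfolding ns_def chain_dims_def by simp
  have yy: "j < length cs" "length x = ns ! j" "\<not> (Suc j < length cs \<and> x = replicate (ns ! j) C1)"
    using y wcells_iff[OF nsne] unfolding ns_def by auto
  obtain c r where cr: "cs ! j = (c, r)" by (cases "cs ! j")
  have yc: "(c, r) \<in> ycells A" using chain_cube[OF cs yy(1)] cr by simp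
  have nsj: "ns ! j = card (ystars A c)" using dims_nth[OF yy(1)] cr unfolding ns_def by simp
  define x' where "x' = repl_star x i (eps e)"
  have lx': "length x' = ns ! j" unfolding x'_def using yy(2) by simp
  have face: "yapply A (c, r) x' = yface A (yapply A (c, r) x) i e"
    unfolding x'_def using ya_face[OF fin yc _ i(1)] yy(2) nsj i(2) by simp
  show ?thesis
  proof (cases "Suc j < length cs \<and> x' = replicate (ns ! j) C1")
    case True
    have wf: "wface ns (j, x) i e = (Suc j, replicate (ns ! Suc j) C0)"
      using True unfolding x'_def ns_def by simp
    obtain c2 r2 where cr2: "cs ! Suc j = (c2, r2)" by (cases "cs ! Suc j")
    have yc2: "(c2, r2) \<in> ycells A" using chain_cube[OF cs] True cr2 by (metis)
    have nsj2: "ns ! Suc j = card (ystars A c2)" using dims_nth[of "Suc j" cs] True cr2 unfolding ns_def by simp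
    have pos: "0 < ns ! Suc j" using cube_chainsD(2)[OF cs] True unfolding ns_def chain_dims_def by simp
    have mem: "(Suc j, replicate (ns ! Suc j) C0) \<in> wcells ns"
      using wcells_iff[OF nsne] True pos unfolding ns_def by simp
    have "chmap A cs (Suc j, replicate (ns ! Suc j) C0) = yd0 A (c2, r2)"
      using ya_rep0[OF fin yc2] ne cr2 nsj2 by simp
    also have "\<dots> = yd1 A (c, r)" using cube_chainsD(6)[OF cs, of j] True cr cr2 by simp
    also have "\<dots> = yapply A (c, r) x'" using ya_rep1[OF fin yc] True nsj by simp
    finally show ?thesis using mem wf face ne cr unfolding ns_def by simp
  next
    case False
    have wf: "wface ns (j, x) i e = (j, x')"
      using False unfolding x'_def ns_def by auto
    have mem: "(j, x') \<in> wcells ns" using wcells_iff[OF nsne] yy(1) lx' False unfolding ns_def by simp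
    show ?thesis using mem wf face ne cr unfolding ns_def by simp
  qed
qed

lemma W_dim:
  assumes fin: "finite A" and cs: "cs \<in> cube_chains A" and ne: "cs \<noteq> []"
    and y: "(j, x) \<in> wcells (chain_dims A cs)"
  shows "ydim A (chmap A cs (j, x)) = wdim (j, x)"
proof -
  have nsne: "chain_dims A cs \<noteq> []" using ne unfolding chain_dims_def by simp
  have yy: "j < length cs" "length x = chain_dims A cs ! j"
    using y wcells_iff[OF nsne] by auto
  obtain c r where cr: "cs ! j = (c, r)" by (cases "cs ! j")
  have yc: "(c, r) \<in> ycells A" using chain_cube[OF cs yy(1)] cr by simp
  show ?thesis using ya_dim[OF fin yc] yy dims_nth[OF yy(1)] cr ne by simp
qed

lemma chmap_fst:
  assumes fin: "finite A" and cs: "cs \<in> cube_chains A" and ne: "cs \<noteq> []"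
    and j: "j < length cs" and a: "a \<in> A"
  shows "fst (chmap A cs (j, x)) a =
    (if hidx cs a = j then x ! yrank (snd (cs ! j)) a else if hidx cs a < j then C1 else C0)"
proof -
  have e: "cs ! j = (cv A (hidx cs) j, snd (cs ! j))" by (rule chain_nth[OF fin cs j])
  have "chmap A cs (j, x) = yapply A (cv A (hidx cs) j, snd (cs ! j)) x" using ne e by simp
  then have "fst (chmap A cs (j, x)) a = (if a \<in> ystars A (cv A (hidx cs) j) then x ! yrank (snd (cs ! j)) a else cv A (hidx cs) j a)"
    by simp
  then show ?thesis using a unfolding ystars_cv by (simp add: cv_def)
qed

lemma chmap_snd:
  assumes fin: "finite A" and cs: "cs \<in> cube_chains A" and ne: "cs \<noteq> []"
    and j: "j < length cs"
  shows "snd (chmap A cs (j, x)) = Restr (snd (cs ! j)) (ystars A (fst (chmap A cs (j, x))))"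
proof -
  have e: "cs ! j = (cv A (hidx cs) j, snd (cs ! j))" by (rule chain_nth[OF fin cs j])
  have yc: "(cv A (hidx cs) j, snd (cs ! j)) \<in> ycells A" using chain_cube[OF cs j] e by simp
  have "chmap A cs (j, x) = yapply A (cv A (hidx cs) j, snd (cs ! j)) x" using ne e by simp
  then show ?thesis using ya_ystars[OF yc, of x] by (simp del: yapply.simps add: yapply_eq)
qed

lemma W_inj:
  assumes fin: "finite A" and cs: "cs \<in> cube_chains A" and ne: "cs \<noteq> []"
    and y1: "y1 \<in> wcells (chain_dims A cs)" and y2: "y2 \<in> wcells (chain_dims A cs)"
    and eq: "chmap A cs y1 = chmap A cs y2"
  shows "y1 = y2"
proof -
  define ns where "ns = chain_dims A cs"
  define q where "q = hidx cs"
  have nsne: "ns \<noteq> []" using ne unfolding ns_def chain_dims_def by simp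
  obtain j1 x1 where y1e: "y1 = (j1, x1)" by (cases y1)
  obtain j2 x2 where y2e: "y2 = (j2, x2)" by (cases y2)
  have w1: "j1 < length cs" "length x1 = ns ! j1" "\<not> (Suc j1 < length cs \<and> x1 = replicate (ns ! j1) C1)"
    using y1 y1e wcells_iff[OF nsne] unfolding ns_def by auto
  have w2: "j2 < length cs" "length x2 = ns ! j2" "\<not> (Suc j2 < length cs \<and> x2 = replicate (ns ! j2) C1)"
    using y2 y2e wcells_iff[OF nsne] unfolding ns_def by auto
  have f1: "\<And>a. a \<in> A \<Longrightarrow> fst (chmap A cs y1) a = (if q a = j1 then x1 ! yrank (snd (cs ! j1)) a else if q a < j1 then C1 else C0)"
    using chmap_fst[OF fin cs ne w1(1)] y1e unfolding q_def by simp
  have f2: "\<And>a. a \<in> A \<Longrightarrow> fst (chmap A cs y2) a = (if q a = j2 then x2 ! yrank (snd (cs ! j2)) a else if q a < j2 then C1 else C0)"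
    using chmap_fst[OF fin cs ne w2(1)] y2e unfolding q_def by simp
  have feq: "\<And>a. fst (chmap A cs y1) a = fst (chmap A cs y2) a" using eq by simp
  have gen: False if lt: "ja < jb" and ja: "ja < length cs" and jb: "jb < length cs"
    and wa: "\<not> (Suc ja < length cs \<and> xa = replicate (ns ! ja) C1)" and la: "length xa = ns ! ja"
    and fe: "\<And>a. a \<in> A \<Longrightarrow> (if q a = ja then xa ! yrank (snd (cs ! ja)) a else if q a < ja then C1 else C0) =
                 (if q a = jb then xb ! yrank (snd (cs ! jb)) a else if q a < jb then C1 else C0)"
    for ja jb xa xb
  proof (cases "Suc ja < jb")
    case True
    then obtain b where b: "b \<in> A" "q b = Suc ja" using chain_level_ne[OF fin cs, of "Suc ja"] jb unfolding q_def by auto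
    show False using fe[OF b(1)] b True by simp
  next
    case False
    then have jb': "jb = Suc ja" using lt by simp
    have st: "strict_total_on {a \<in> A. q a = ja} (snd (cs ! ja))" using chain_snd[OF fin cs ja] unfolding q_def .
    have fS: "finite {a \<in> A. q a = ja}" using fin by simp
    have card: "ns ! ja = card {a \<in> A. q a = ja}" using dims_nth[OF ja] chain_ystars[OF fin cs ja] unfolding ns_def q_def by simp
    have "xa = replicate (ns ! ja) C1"
    proof (rule nth_equalityI)
      show "length xa = length (replicate (ns ! ja) C1)" using la by simp
    next
      fix k assume k: "k < length xa"
      then obtain a where a: "a \<in> {a \<in> A. q a = ja}" "yrank (snd (cs ! ja)) a = k"
        using yrank_surj[OF st fS, of k] la card by auto
      then show "xa ! k = replicate (ns ! ja) C1 ! k" using fe[of a] jb' k la by auto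
    qed
    then show False using wa jb' jb by simp
  qed
  show ?thesis
  proof (cases j1 j2 rule: linorder_cases)
    case less
    show ?thesis using gen[OF less w1(1) w2(1) w1(3) w1(2), of x2] f1 f2 feq by auto
  next
    case greater
    show ?thesis using gen[OF greater w2(1) w1(1) w2(3) w2(2), of x1] f1 f2 feq by auto
  next
    case equal
    have st: "strict_total_on {a \<in> A. q a = j1} (snd (cs ! j1))" using chain_snd[OF fin cs w1(1)] unfolding q_def .
    have fS: "finite {a \<in> A. q a = j1}" using fin by simp
    have card: "ns ! j1 = card {a \<in> A. q a = j1}" using dims_nth[OF w1(1)] chain_ystars[OF fin cs w1(1)] unfolding ns_def q_def by simp
    have "x1 = x2"
    proof (rule nth_equalityI)
      show "length x1 = length x2" using w1(2) w2(2) equal by simp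
    next
      fix k assume k: "k < length x1"
      then obtain a where a: "a \<in> {a \<in> A. q a = j1}" "yrank (snd (cs ! j1)) a = k"
        using yrank_surj[OF st fS, of k] w1(2) card by auto
      then show "x1 ! k = x2 ! k" using f1[of a] f2[of a] feq[of a] equal by auto
    qed
    then show ?thesis using y1e y2e equal by simp
  qed
qed



lemma chain_le_iff_img:
  assumes fin: "finite A" and cs: "cs \<in> cube_chains A" and es: "es \<in> cube_chains A" and A: "A \<noteq> {}"
  shows "chain_le A cs es \<longleftrightarrow>
    (\<forall>y\<in>wcells (chain_dims A cs). \<exists>z\<in>wcells (chain_dims A es). chmap A es z = chmap A cs y)"
proof
  assume "chain_le A cs es"
  then obtain f where f: "precub_map wdim (wface (chain_dims A cs)) (wcells (chain_dims A cs))
                     wdim (wface (chain_dims A es)) (wcells (chain_dims A es)) f"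
    "\<forall>x\<in>wcells (chain_dims A cs). chmap A es (f x) = chmap A cs x"
    unfolding chain_le_def by blast
  then show "\<forall>y\<in>wcells (chain_dims A cs). \<exists>z\<in>wcells (chain_dims A es). chmap A es z = chmap A cs y"
    unfolding precub_map_def by blast
next
  assume img: "\<forall>y\<in>wcells (chain_dims A cs). \<exists>z\<in>wcells (chain_dims A es). chmap A es z = chmap A cs y"
  have csne: "cs \<noteq> []" and esne: "es \<noteq> []" using chain_nil[OF cs] chain_nil[OF es] A by auto
  define f where "f y = (SOME z. z \<in> wcells (chain_dims A es) \<and> chmap A es z = chmap A cs y)" for y
  have fp: "f y \<in> wcells (chain_dims A es) \<and> chmap A es (f y) = chmap A cs y"
    if "y \<in> wcells (chain_dims A cs)" for y
  proof -
    have "\<exists>z. z \<in> wcells (chain_dims A es) \<and> chmap A es z = chmap A cs y" using img that by blast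
    then show ?thesis unfolding f_def by (rule someI_ex)
  qed
  have dimf: "wdim (f y) = wdim y" if y: "y \<in> wcells (chain_dims A cs)" for y
  proof -
    obtain j x where yj: "y = (j, x)" by (cases y)
    obtain j' x' where fj: "f y = (j', x')" by (cases "f y")
    have "wdim (f y) = ydim A (chmap A es (f y))" using W_dim[OF fin es esne, of j' x'] fp[OF y] fj by simp
    also have "\<dots> = ydim A (chmap A cs y)" using fp[OF y] by simp
    also have "\<dots> = wdim y" using W_dim[OF fin cs csne, of j x] y yj by simp
    finally show ?thesis .
  qed
  have "precub_map wdim (wface (chain_dims A cs)) (wcells (chain_dims A cs))
                     wdim (wface (chain_dims A es)) (wcells (chain_dims A es)) f"
    unfolding precub_map_def
  proof (intro ballI conjI allI impI)
    fix y assume y: "y \<in> wcells (chain_dims A cs)"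
    show "f y \<in> wcells (chain_dims A es)" using fp[OF y] by blast
    show "wdim (f y) = wdim y" using dimf[OF y] .
    fix i e assume i: "1 \<le> i \<and> i \<le> wdim y"
    obtain j x where yj: "y = (j, x)" by (cases y)
    obtain j' x' where fj: "f y = (j', x')" by (cases "f y")
    have A1: "wface (chain_dims A cs) y i e \<in> wcells (chain_dims A cs) \<and>
         chmap A cs (wface (chain_dims A cs) y i e) = yface A (chmap A cs y) i e"
      using W_all[OF fin cs csne, of j x i e] y yj i by simp
    have fy: "f y \<in> wcells (chain_dims A es)" using fp[OF y] by blast
    have A2: "wface (chain_dims A es) (f y) i e \<in> wcells (chain_dims A es) \<and>
         chmap A es (wface (chain_dims A es) (f y) i e) = yface A (chmap A es (f y)) i e"
      using W_all[OF fin es esne, of j' x' i e] fy fj i dimf[OF y] by simp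
    have B: "f (wface (chain_dims A cs) y i e) \<in> wcells (chain_dims A es) \<and>
        chmap A es (f (wface (chain_dims A cs) y i e)) = chmap A cs (wface (chain_dims A cs) y i e)"
      using fp A1 by blast
    show "f (wface (chain_dims A cs) y i e) = wface (chain_dims A es) (f y) i e"
      using W_inj[OF fin es esne, of "f (wface (chain_dims A cs) y i e)" "wface (chain_dims A es) (f y) i e"]
        A1 A2 B fp[OF y] by simp
  qed
  moreover have "\<forall>x\<in>wcells (chain_dims A cs). chmap A es (f x) = chmap A cs x" using fp by blast
  ultimately show "chain_le A cs es" unfolding chain_le_def by blast
qed

lemma I1:
  assumes fin: "finite A" and es: "es \<in> cube_chains A" and ne: "es \<noteq> []"
    and z: "(j, x) \<in> wcells (chain_dims A es)"
  shows "j < length es \<and>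
    (\<forall>a\<in>A. (hidx es a < j \<longrightarrow> fst (chmap A es (j, x)) a = C1) \<and> (j < hidx es a \<longrightarrow> fst (chmap A es (j, x)) a = C0)) \<and>
    ystars A (fst (chmap A es (j, x))) \<subseteq> {a \<in> A. hidx es a = j} \<and>
    snd (chmap A es (j, x)) = Restr (snd (es ! j)) (ystars A (fst (chmap A es (j, x))))"
proof -
  have nsne: "chain_dims A es \<noteq> []" using ne unfolding chain_dims_def by simp
  have j: "j < length es" using z wcells_iff[OF nsne] by auto
  have f: "\<And>a. a \<in> A \<Longrightarrow> fst (chmap A es (j, x)) a =
    (if hidx es a = j then x ! yrank (snd (es ! j)) a else if hidx es a < j then C1 else C0)"
    using chmap_fst[OF fin es ne j] by blast
  have "ystars A (fst (chmap A es (j, x))) \<subseteq> {a \<in> A. hidx es a = j}"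
  proof
    fix a assume "a \<in> ystars A (fst (chmap A es (j, x)))"
    then have "a \<in> A" "fst (chmap A es (j, x)) a = CS" by (auto simp: ystars_def)
    then show "a \<in> {a \<in> A. hidx es a = j}" using f[of a] by (auto split: if_splits)
  qed
  then show ?thesis using j f chmap_snd[OF fin es ne j] by auto
qed

lemma I2:
  assumes fin: "finite A" and es: "es \<in> cube_chains A" and ne: "es \<noteq> []"
    and c: "c \<in> extensional A" and j: "j < length es"
    and lo: "\<And>a. a \<in> A \<Longrightarrow> hidx es a < j \<Longrightarrow> c a = C1"
    and hi: "\<And>a. a \<in> A \<Longrightarrow> j < hidx es a \<Longrightarrow> c a = C0"
    and r: "r = Restr (snd (es ! j)) (ystars A c)"
  shows "\<exists>z\<in>wcells (chain_dims A es). chmap A es z = (c, r)"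
proof -
  define q where "q = hidx es"
  define L where "L = {a \<in> A. q a = j}"
  define R where "R = snd (es ! j)"
  define N where "N = card L"
  have nsne: "chain_dims A es \<noteq> []" using ne unfolding chain_dims_def by simp
  have st: "strict_total_on L R" using chain_snd[OF fin es j] unfolding L_def R_def q_def .
  have fL: "finite L" using fin unfolding L_def by simp
  have Nj: "chain_dims A es ! j = N" using dims_nth[OF j] chain_ystars[OF fin es j] unfolding N_def L_def q_def by simp
  define x where "x = map (\<lambda>k. c (THE a. a \<in> L \<and> yrank R a = k)) [0..<N]"
  have lx: "length x = N" unfolding x_def by simp
  have xa: "x ! yrank R a = c a" if a: "a \<in> L" for a
  proof -
    have "yrank R a < N" using yrank_lt_card[OF st fL a] unfolding N_def .
    then show ?thesis unfolding x_def using yrank_the[OF st fL a] by simp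
  qed
  have ecell: "es ! j = (cv A q j, R)" using chain_nth[OF fin es j] unfolding q_def R_def .
  have yc: "(cv A q j, R) \<in> ycells A" using chain_cube[OF es j] ecell by simp
  have fsteq: "fst (chmap A es (j, x)) = c"
  proof
    fix a show "fst (chmap A es (j, x)) a = c a"
    proof (cases "a \<in> A")
      case True
      then show ?thesis using chmap_fst[OF fin es ne j True, of x] xa[of a] lo[OF True] hi[OF True]
        unfolding L_def R_def q_def by auto
    next
      case False
      have "fst (chmap A es (j, x)) \<in> extensional A" using ya_ext[OF yc, of x] ne ecell by simp
      then show ?thesis using False c by (simp add: extensional_def)
    qed
  qed
  have sndeq: "snd (chmap A es (j, x)) = r"
    using chmap_snd[OF fin es ne j, of x] fsteq r by simp
  have cm: "chmap A es (j, x) = (c, r)" using fsteq sndeq by (metis prod.collapse)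
  show ?thesis
  proof (cases "Suc j < length es \<and> x = replicate N C1")
    case False
    then have "(j, x) \<in> wcells (chain_dims A es)" using wcells_iff[OF nsne] j lx Nj by simp
    then show ?thesis using cm by blast
  next
    case True
    obtain c2 r2 where cr2: "es ! Suc j = (c2, r2)" by (cases "es ! Suc j")
    have yc2: "(c2, r2) \<in> ycells A" using chain_cube[OF es] True cr2 by metis
    have N2: "chain_dims A es ! Suc j = card (ystars A c2)" using dims_nth[of "Suc j" es] True cr2 by simp
    have pos: "0 < chain_dims A es ! Suc j" using cube_chainsD(2)[OF es] True unfolding chain_dims_def by simp
    have mem: "(Suc j, replicate (chain_dims A es ! Suc j) C0) \<in> wcells (chain_dims A es)"
      using wcells_iff[OF nsne] True pos by simp
    have NN: "N = card (ystars A (cv A q j))" unfolding N_def L_def by (simp add: ystars_cv)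
    have "chmap A es (Suc j, replicate (chain_dims A es ! Suc j) C0) = yd0 A (c2, r2)"
      using ya_rep0[OF fin yc2] ne cr2 N2 by simp
    also have "\<dots> = yd1 A (cv A q j, R)" using cube_chainsD(6)[OF es, of j] True ecell cr2 by simp
    also have "\<dots> = yapply A (cv A q j, R) x" using ya_rep1[OF fin yc] True NN by simp
    also have "\<dots> = (c, r)" using cm ne ecell by simp
    finally show ?thesis using mem by blast
  qed
qed

lemma top_cell:
  assumes fin: "finite A" and cs: "cs \<in> cube_chains A" and ne: "cs \<noteq> []" and k: "k < length cs"
  shows "(k, replicate (chain_dims A cs ! k) CS) \<in> wcells (chain_dims A cs) \<and>
         chmap A cs (k, replicate (chain_dims A cs ! k) CS) = cs ! k"
proof -
  have nsne: "chain_dims A cs \<noteq> []" using ne unfolding chain_dims_def by simp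
  have pos: "0 < chain_dims A cs ! k" using cube_chainsD(2)[OF cs] k unfolding chain_dims_def by simp
  obtain c r where cr: "cs ! k = (c, r)" by (cases "cs ! k")
  have yc: "(c, r) \<in> ycells A" using chain_cube[OF cs k] cr by simp
  have "chain_dims A cs ! k = card (ystars A c)" using dims_nth[OF k] cr by simp
  then show ?thesis using wcells_iff[OF nsne] k pos ya_top[OF yc fin] ne cr by simp
qed



lemma dle_refl: "dle d d"
  by (cases d) simp

lemma chain_le_refl_nil: "chain_le A [] []"
  unfolding chain_le_def precub_map_def by (rule exI[of _ id]) simp

lemma conj3:
  assumes fin: "finite A" and cs: "cs \<in> cube_chains A" and es: "es \<in> cube_chains A"
  shows "chain_le A cs es \<longleftrightarrow> dle (dorder A es) (dorder A cs)"
proof (cases "A = {}")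
  case True
  then have "cs = []" "es = []" using chain_nil[OF cs] chain_nil[OF es] by auto
  moreover have "chain_le A [] []" by (rule chain_le_refl_nil)
  moreover have "dle (dorder A []) (dorder A [])" by (rule dle_refl)
  ultimately show ?thesis by blast
next
  case False
  have csne: "cs \<noteq> []" and esne: "es \<noteq> []" using chain_nil[OF cs] chain_nil[OF es] False by auto
  define p where "p = hidx cs"
  define q where "q = hidx es"
  have dle_iff: "dle (dorder A es) (dorder A cs) \<longleftrightarrow>
     (\<forall>a\<in>A. \<forall>b\<in>A. q a < q b \<longrightarrow> p a < p b) \<and>
     (\<forall>a\<in>A. \<forall>b\<in>A. p a = p b \<and> (a, b) \<in> snd (cs ! p a) \<longrightarrow> q a = q b \<and> (a, b) \<in> snd (es ! q a))"
    unfolding dorder_def p_def q_def by auto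
  have pS: "\<And>k a. k < length cs \<Longrightarrow> a \<in> A \<Longrightarrow> fst (cs ! k) a = (if p a < k then C1 else if p a = k then CS else C0)"
    using chain_struct[OF fin cs] unfolding p_def by blast
  have pys: "\<And>k. k < length cs \<Longrightarrow> ystars A (fst (cs ! k)) = {a \<in> A. p a = k}"
    using chain_ystars[OF fin cs] unfolding p_def by blast
  have plt: "\<And>a. a \<in> A \<Longrightarrow> p a < length cs" using chain_hidx_lt[OF fin cs] unfolding p_def by blast
  have qlt: "\<And>a. a \<in> A \<Longrightarrow> q a < length es" using chain_hidx_lt[OF fin es] unfolding q_def by blast
  have img_iff: "(\<forall>y\<in>wcells (chain_dims A cs). \<exists>z\<in>wcells (chain_dims A es). chmap A es z = chmap A cs y)
     \<longleftrightarrow> dle (dorder A es) (dorder A cs)"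
  proof
    assume img: "\<forall>y\<in>wcells (chain_dims A cs). \<exists>z\<in>wcells (chain_dims A es). chmap A es z = chmap A cs y"
    have TOP: "\<exists>j. (\<forall>a\<in>A. p a = k \<longrightarrow> q a = j) \<and> (\<forall>a\<in>A. k < p a \<longrightarrow> j \<le> q a) \<and>
                  snd (cs ! k) = Restr (snd (es ! j)) {a \<in> A. p a = k}" if k: "k < length cs" for k
    proof -
      obtain z where z: "z \<in> wcells (chain_dims A es)" "chmap A es z = cs ! k"
        using top_cell[OF fin cs csne k] img by metis
      obtain j x where zj: "z = (j, x)" by (cases z)
      have I: "j < length es \<and>
        (\<forall>a\<in>A. (q a < j \<longrightarrow> fst (cs ! k) a = C1) \<and> (j < q a \<longrightarrow> fst (cs ! k) a = C0)) \<and>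
        ystars A (fst (cs ! k)) \<subseteq> {a \<in> A. q a = j} \<and>
        snd (cs ! k) = Restr (snd (es ! j)) (ystars A (fst (cs ! k)))"
        using I1[OF fin es esne, of j x] z zj unfolding q_def by simp
      have "\<forall>a\<in>A. p a = k \<longrightarrow> q a = j" using I pys[OF k] by auto
      moreover have "\<forall>a\<in>A. k < p a \<longrightarrow> j \<le> q a"
      proof (intro ballI impI)
        fix a assume a: "a \<in> A" "k < p a"
        then have "fst (cs ! k) a = C0" using pS[OF k a(1)] by simp
        then show "j \<le> q a" using I a(1) by (metis cval.distinct(3) not_le_imp_less)
      qed
      moreover have "snd (cs ! k) = Restr (snd (es ! j)) {a \<in> A. p a = k}" using I pys[OF k] by simp
      ultimately show ?thesis by blast
    qed
    have X: "\<forall>a\<in>A. \<forall>b\<in>A. q a < q b \<longrightarrow> p a < p b"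
    proof (intro ballI impI)
      fix a b assume a: "a \<in> A" and b: "b \<in> A" and qab: "q a < q b"
      show "p a < p b"
      proof (rule ccontr)
        assume "\<not> p a < p b"
        then have pp: "p b \<le> p a" by simp
        obtain j where j: "\<forall>a\<in>A. p a = p b \<longrightarrow> q a = j" "\<forall>a\<in>A. p b < p a \<longrightarrow> j \<le> q a"
          using TOP[OF plt[OF b]] by blast
        have "q b = j" using j(1) b by simp
        moreover have "j \<le> q a" using j a pp by (cases "p a = p b") auto
        ultimately show False using qab by simp
      qed
    qed
    have Y: "\<forall>a\<in>A. \<forall>b\<in>A. p a = p b \<and> (a, b) \<in> snd (cs ! p a) \<longrightarrow> q a = q b \<and> (a, b) \<in> snd (es ! q a)"
    proof (intro ballI impI)
      fix a b assume a: "a \<in> A" and b: "b \<in> A" and h: "p a = p b \<and> (a, b) \<in> snd (cs ! p a)"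
      obtain j where j: "\<forall>c\<in>A. p c = p a \<longrightarrow> q c = j" "snd (cs ! p a) = Restr (snd (es ! j)) {c \<in> A. p c = p a}"
        using TOP[OF plt[OF a]] by blast
      show "q a = q b \<and> (a, b) \<in> snd (es ! q a)" using j a b h by auto
    qed
    show "dle (dorder A es) (dorder A cs)" using dle_iff X Y by blast
  next
    assume "dle (dorder A es) (dorder A cs)"
    then have X: "\<And>a b. a \<in> A \<Longrightarrow> b \<in> A \<Longrightarrow> q a < q b \<Longrightarrow> p a < p b"
      and Y: "\<And>a b. a \<in> A \<Longrightarrow> b \<in> A \<Longrightarrow> p a = p b \<Longrightarrow> (a, b) \<in> snd (cs ! p a) \<Longrightarrow> q a = q b \<and> (a, b) \<in> snd (es ! q a)"
      using dle_iff by blast+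
    show "\<forall>y\<in>wcells (chain_dims A cs). \<exists>z\<in>wcells (chain_dims A es). chmap A es z = chmap A cs y"
    proof
      fix y assume y: "y \<in> wcells (chain_dims A cs)"
      obtain k x where yk: "y = (k, x)" by (cases y)
      have I: "k < length cs \<and>
        (\<forall>a\<in>A. (p a < k \<longrightarrow> fst (chmap A cs y) a = C1) \<and> (k < p a \<longrightarrow> fst (chmap A cs y) a = C0)) \<and>
        ystars A (fst (chmap A cs y)) \<subseteq> {a \<in> A. p a = k} \<and>
        snd (chmap A cs y) = Restr (snd (cs ! k)) (ystars A (fst (chmap A cs y)))"
        using I1[OF fin cs csne, of k x] y yk unfolding p_def by simp
      have k: "k < length cs" using I by blast
      obtain b where b: "b \<in> A" "p b = k" using chain_level_ne[OF fin cs k] unfolding p_def by blast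
      define j where "j = q b"
      have j: "j < length es" unfolding j_def using qlt[OF b(1)] .
      have stc: "strict_total_on {a \<in> A. p a = k} (snd (cs ! k))" using chain_snd[OF fin cs k] unfolding p_def .
      have ste: "strict_total_on {a \<in> A. q a = j} (snd (es ! j))" using chain_snd[OF fin es j] unfolding q_def .
      have qc: "\<And>a. a \<in> A \<Longrightarrow> p a = k \<Longrightarrow> q a = j"
      proof -
        fix a assume a: "a \<in> A" "p a = k"
        show "q a = j"
        proof (cases "a = b")
          case True then show ?thesis unfolding j_def by simp
        next
          case False
          then have "(a, b) \<in> snd (cs ! k) \<or> (b, a) \<in> snd (cs ! k)"
            using stot_D(4)[OF stc, of a b] a b by auto
          then show ?thesis using Y[OF a(1) b(1)] Y[OF b(1) a(1)] a b unfolding j_def by auto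
        qed
      qed
      define c where "c = fst (chmap A cs y)"
      define r where "r = snd (chmap A cs y)"
      have cext: "c \<in> extensional A"
      proof -
        obtain c0 r0 where cr: "cs ! k = (c0, r0)" by (cases "cs ! k")
        have "(c0, r0) \<in> ycells A" using chain_cube[OF cs k] cr by simp
        then show ?thesis using ya_ext[of c0 r0 A x] csne cr yk unfolding c_def by simp
      qed
      have lo: "\<And>a. a \<in> A \<Longrightarrow> q a < j \<Longrightarrow> c a = C1"
      proof -
        fix a assume a: "a \<in> A" "q a < j"
        then have "p a < k" using X[OF a(1) b(1)] b unfolding j_def by simp
        then show "c a = C1" using I a(1) unfolding c_def by blast
      qed
      have hi: "\<And>a. a \<in> A \<Longrightarrow> j < q a \<Longrightarrow> c a = C0"
      proof -
        fix a assume a: "a \<in> A" "j < q a"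
        then have "k < p a" using X[OF b(1) a(1)] b unfolding j_def by simp
        then show "c a = C0" using I a(1) unfolding c_def by blast
      qed
      have T: "ystars A c \<subseteq> {a \<in> A. p a = k}" using I unfolding c_def by blast
      have rr: "r = Restr (snd (es ! j)) (ystars A c)"
      proof -
        have "Restr (snd (cs ! k)) (ystars A c) = Restr (snd (es ! j)) (ystars A c)"
        proof (intro set_eqI iffI)
          fix z assume z: "z \<in> Restr (snd (cs ! k)) (ystars A c)"
          obtain a1 a2 where zz: "z = (a1, a2)" by (cases z)
          have m: "a1 \<in> A" "a2 \<in> A" "p a1 = k" "p a2 = k" using z zz T by auto
          have "(a1, a2) \<in> snd (es ! q a1)" using Y[OF m(1,2)] m z zz by auto
          then show "z \<in> Restr (snd (es ! j)) (ystars A c)" using qc[OF m(1,3)] z zz by auto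
        next
          fix z assume z: "z \<in> Restr (snd (es ! j)) (ystars A c)"
          obtain a1 a2 where zz: "z = (a1, a2)" by (cases z)
          have m: "a1 \<in> A" "a2 \<in> A" "p a1 = k" "p a2 = k" using z zz T by auto
          have ne: "a1 \<noteq> a2" using z zz stot_D(2)[OF ste] by auto
          have "(a1, a2) \<in> snd (cs ! k)"
          proof (rule ccontr)
            assume n: "(a1, a2) \<notin> snd (cs ! k)"
            then have "(a2, a1) \<in> snd (cs ! k)" using stot_D(4)[OF stc, of a1 a2] m ne by auto
            then have "(a2, a1) \<in> snd (es ! j)" using Y[OF m(2,1)] m qc[OF m(2,4)] by auto
            then have "(a1, a1) \<in> snd (es ! j)" using stot_D(3)[OF ste] z zz by blast
            then show False using stot_D(2)[OF ste] by blast
          qed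
          then show "z \<in> Restr (snd (cs ! k)) (ystars A c)" using z zz by auto
        qed
        then show ?thesis using I unfolding r_def c_def by simp
      qed
      obtain z where z: "z \<in> wcells (chain_dims A es)" "chmap A es z = (c, r)"
        using I2[OF fin es esne cext j, of r] lo hi rr unfolding q_def by blast
      have "chmap A cs y = (c, r)" unfolding c_def r_def by simp
      then show "\<exists>z\<in>wcells (chain_dims A es). chmap A es z = chmap A cs y" using z by metis
    qed
  qed
  show ?thesis using chain_le_iff_img[OF fin cs es False] img_iff by simp
qed


lemma fst_cube_act: "fst (cube_act y \<sigma>) = fst y \<circ> \<sigma>"
  by (cases y) simp

lemma snd_cube_act: "snd (cube_act y \<sigma>) = rel_act (snd y) \<sigma>"
  by (cases y) simp

lemma hidx_act: "hidx (chain_act cs \<sigma>) a = hidx cs (\<sigma> a)"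
proof -
  have "\<And>j. (j < length (chain_act cs \<sigma>) \<and> fst (chain_act cs \<sigma> ! j) a = CS) \<longleftrightarrow>
            (j < length cs \<and> fst (cs ! j) (\<sigma> a) = CS)"
    by (auto simp: chain_act_def fst_cube_act)
  then show ?thesis unfolding hidx_def by simp
qed

lemma conj5a:
  assumes fin: "finite A" and s: "\<sigma> permutes A" and cs: "cs \<in> cube_chains A"
  shows "dorder A (chain_act cs \<sigma>) = dorder_act (dorder A cs) \<sigma>"
proof -
  have inA: "\<And>a. \<sigma> a \<in> A \<longleftrightarrow> a \<in> A" using permutes_in_image[OF s] by blast
  have snd_act: "\<And>a. a \<in> A \<Longrightarrow> snd (chain_act cs \<sigma> ! hidx cs (\<sigma> a)) = rel_act (snd (cs ! hidx cs (\<sigma> a))) \<sigma>"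
  proof -
    fix a assume a: "a \<in> A"
    have "hidx cs (\<sigma> a) < length cs" using chain_hidx_lt[OF fin cs] inA a by blast
    then show "snd (chain_act cs \<sigma> ! hidx cs (\<sigma> a)) = rel_act (snd (cs ! hidx cs (\<sigma> a))) \<sigma>"
      by (simp add: chain_act_def snd_cube_act)
  qed
  show ?thesis
    unfolding dorder_def dorder_act.simps hidx_act
  proof (intro arg_cong2[where f=Pair])
    show "{(a, b). a \<in> A \<and> b \<in> A \<and> hidx cs (\<sigma> a) < hidx cs (\<sigma> b)} =
      rel_act {(a, b). a \<in> A \<and> b \<in> A \<and> hidx cs a < hidx cs b} \<sigma>"
      unfolding rel_act_def using inA by auto
    show "{(a, b). a \<in> A \<and> b \<in> A \<and> hidx cs (\<sigma> a) = hidx cs (\<sigma> b) \<and> (a, b) \<in> snd (chain_act cs \<sigma> ! hidx cs (\<sigma> a))} =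
      rel_act {(a, b). a \<in> A \<and> b \<in> A \<and> hidx cs a = hidx cs b \<and> (a, b) \<in> snd (cs ! hidx cs a)} \<sigma>"
      unfolding rel_act_def using inA snd_act by (auto simp: rel_act_def)
  qed
qed

lemma conj5b:
  assumes fin: "finite A" and s: "\<sigma> permutes A" and reg: "regular A (X, Y)"
  shows "chain_of A (dorder_act (X, Y) \<sigma>) = chain_act (chain_of A (X, Y)) \<sigma>"
proof -
  have inA: "\<And>a. \<sigma> a \<in> A \<longleftrightarrow> a \<in> A" using permutes_in_image[OF s] by blast
  have out: "\<And>a. a \<notin> A \<Longrightarrow> \<sigma> a = a" using permutes_not_in[OF s] by blast
  have "semilinear A X" using reg by simp
  then obtain h0 l where ind0: "induced_by A h0 l X" unfolding semilinear_def by blast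
  define h where "h = restrict h0 A"
  have ind: "induced_by A h l X" unfolding h_def by (rule induced_restrict[OF ind0])
  have hf: "hfun A X = h" using hfun_eq[OF _ ind] unfolding h_def by simp
  have cl: "card (h ` A) = l" using induced_card[OF ind] .
  have img: "\<sigma> ` A = A" using permutes_image[OF s] .
  have ind': "induced_by A (h \<circ> \<sigma>) l (rel_act X \<sigma>)"
  proof -
    have i1: "(h \<circ> \<sigma>) ` A = h ` A" using img by (metis image_comp)
    have "X = {(a, b). a \<in> A \<and> b \<in> A \<and> h a < h b}" using ind unfolding induced_by_def by blast
    then have "rel_act X \<sigma> = {(a, b). a \<in> A \<and> b \<in> A \<and> (h \<circ> \<sigma>) a < (h \<circ> \<sigma>) b}"
      unfolding rel_act_def using inA by auto
    then show ?thesis using ind i1 unfolding induced_by_def by simp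
  qed
  have ext': "h \<circ> \<sigma> \<in> extensional A" unfolding h_def using out by (auto simp: extensional_def)
  have hf': "hfun A (rel_act X \<sigma>) = h \<circ> \<sigma>" using hfun_eq[OF ext' ind'] .
  have cl': "card ((h \<circ> \<sigma>) ` A) = l" using induced_card[OF ind'] .
  have L: "chain_of A (dorder_act (X, Y) \<sigma>) =
    map (\<lambda>j. (restrict (\<lambda>a. if h (\<sigma> a) < j then C1 else if h (\<sigma> a) = j then CS else C0) A,
               Restr (rel_act Y \<sigma>) {a \<in> A. h (\<sigma> a) = j})) [1..<Suc l]"
    using hf' cl' by (simp add: Let_def o_def del: upt_Suc)
  have R: "chain_act (chain_of A (X, Y)) \<sigma> =
    map (\<lambda>j. cube_act (restrict (\<lambda>a. if h a < j then C1 else if h a = j then CS else C0) A,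
               Restr Y {a \<in> A. h a = j}) \<sigma>) [1..<Suc l]"
    using hf cl by (simp add: Let_def chain_act_def del: upt_Suc)
  show ?thesis
    unfolding L R
  proof (rule map_cong[OF refl])
    fix j
    show "(restrict (\<lambda>a. if h (\<sigma> a) < j then C1 else if h (\<sigma> a) = j then CS else C0) A,
               Restr (rel_act Y \<sigma>) {a \<in> A. h (\<sigma> a) = j}) =
          cube_act (restrict (\<lambda>a. if h a < j then C1 else if h a = j then CS else C0) A,
               Restr Y {a \<in> A. h a = j}) \<sigma>"
      using inA out by (auto simp: fun_eq_iff rel_act_def restrict_def)
  qed
qed

theorem main_thm:
  fixes A :: "'a set"
  assumes fin: "finite A"
  shows "(\<forall>cs\<in>cube_chains A. dorder A cs \<in> regular_dorders A \<and> chain_of A (dorder A cs) = cs)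
       \<and> (\<forall>d\<in>regular_dorders A. chain_of A d \<in> cube_chains A \<and> dorder A (chain_of A d) = d)
       \<and> (\<forall>cs\<in>cube_chains A. \<forall>es\<in>cube_chains A.
            chain_le A cs es \<longleftrightarrow> dle (dorder A es) (dorder A cs))
       \<and> (\<forall>d1\<in>regular_dorders A. \<forall>d2\<in>regular_dorders A.
            dle d2 d1 \<longleftrightarrow> chain_le A (chain_of A d1) (chain_of A d2))
       \<and> (\<forall>\<sigma>. \<sigma> permutes A \<longrightarrow>
            (\<forall>cs\<in>cube_chains A. dorder A (chain_act cs \<sigma>) = dorder_act (dorder A cs) \<sigma>)
          \<and> (\<forall>d\<in>regular_dorders A. chain_of A (dorder_act d \<sigma>) = chain_act (chain_of A d) \<sigma>))"
proof -
  have c2: "chain_of A d \<in> cube_chains A \<and> dorder A (chain_of A d) = d" if "d \<in> regular_dorders A" for d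
  proof -
    obtain X Y where d: "d = (X, Y)" by (cases d)
    show ?thesis using conj2[OF fin] that d by (simp add: regular_dorders_def)
  qed
  have c4: "dle d2 d1 \<longleftrightarrow> chain_le A (chain_of A d1) (chain_of A d2)"
    if "d1 \<in> regular_dorders A" "d2 \<in> regular_dorders A" for d1 d2
    using conj3[OF fin, of "chain_of A d1" "chain_of A d2"] c2[OF that(1)] c2[OF that(2)] by simp
  have c5: "chain_of A (dorder_act d \<sigma>) = chain_act (chain_of A d) \<sigma>"
    if "\<sigma> permutes A" "d \<in> regular_dorders A" for d \<sigma>
  proof -
    obtain X Y where d: "d = (X, Y)" by (cases d)
    show ?thesis using conj5b[OF fin that(1)] that(2) d by (simp add: regular_dorders_def)
  qed
  show ?thesis using conj1[OF fin] c2 conj3[OF fin] c4 conj5a[OF fin] c5 by blast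
qed


theorem proposition4p9:
  fixes A :: "'a set"
  assumes "finite A"
  shows "(\<forall>cs\<in>cube_chains A. dorder A cs \<in> regular_dorders A \<and> chain_of A (dorder A cs) = cs)
       \<and> (\<forall>d\<in>regular_dorders A. chain_of A d \<in> cube_chains A \<and> dorder A (chain_of A d) = d)
       \<and> (\<forall>cs\<in>cube_chains A. \<forall>es\<in>cube_chains A.
            chain_le A cs es \<longleftrightarrow> dle (dorder A es) (dorder A cs))
       \<and> (\<forall>d1\<in>regular_dorders A. \<forall>d2\<in>regular_dorders A.
            dle d2 d1 \<longleftrightarrow> chain_le A (chain_of A d1) (chain_of A d2))
       \<and> (\<forall>\<sigma>. \<sigma> permutes A \<longrightarrow>
            (\<forall>cs\<in>cube_chains A. dorder A (chain_act cs \<sigma>) = dorder_act (dorder A cs) \<sigma>)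
          \<and> (\<forall>d\<in>regular_dorders A. chain_of A (dorder_act d \<sigma>) = chain_act (chain_of A d) \<sigma>))"
  using main_thm[OF assms] .

end
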